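(* Assume Case 2 holds and $d>0$. Let $(A,B)=(n_{s-1},m_{s-1})$ and for $n\ge1$ put $$(A_n,B_n)=(\gamma_n-(\gamma-A)d^{n-1},\ Bd^{n-1}),\qquad (A_n^*,B_n^* )=\big((\delta^{n-1}+\delta^{n-2}B+\cdots+\delta B^{n-2}+B^{n-1})A,\ B^n\big).$$ (i) If $\delta<T_{s-1}$, then for every $n\ge1$, $(A_n,B_n)$ is the vertex of $N(Q^n)$ immediately preceding $(\gamma_n,d^n)$ (in order of increasing $x$-coordinate), the segment joining them has slope $-l_1^{-1}$, and $\delta^n$ is strictly smaller than the $y$-intercept of the line through $(\gamma_n,d^n)$ and $(A_n,B_n)$. (ii) If $\delta=T_{s-1}$, then for every $n\ge1$, $(A_n^*,B_n^* )$ is the vertex of $N(Q^n)$ immediately preceding $(\gamma_n,d^n)$, the segment joining them has slope $-l_1^{-1}$, and $\delta^n$ equals the $y$-intercept of the line through $(\gamma_n,d^n)$ and $(A_n^*,B_n^* )$.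
   Context: Let $f(z,w)=(p(z),q(z,w))$ be a holomorphic skew product germ at the origin of $\mathbb{C}^2$ with $f(0,0)=(0,0)$, where $p(z)=a_\delta z^\delta+O(z^{\delta+1})$ with $a_\delta\neq0$ and integer $\delta\ge1$, and $q(z,w)=\sum_{i+j\ge1}b_{ij}z^iw^j$ is not identically zero. For $n\ge1$ write $f^n=(p^n,Q^n)$. The Newton polygon $N(g)$ of a nonzero germ $g=\sum g_{ij}z^iw^j$ is the convex hull of $\bigcup_{g_{ij}\neq0}\{(x,y):x\ge i,\ y\ge j\}$. Let $(n_1,m_1),\dots,(n_s,m_s)$ be the vertices of $N(q)$ with $n_1<\cdots<n_s$, $m_1>\cdots>m_s$; for $1\le k\le s-1$ let $T_k$ be the $y$-intercept of the line through $(n_k,m_k)$ and $(n_{k+1},m_{k+1})$. Case 2 means: $s>1$ and $\delta\le T_{s-1}$; set $(\gamma,d)=(n_s,m_s)$ and $l_1=\frac{n_s-n_{s-1}}{m_{s-1}-m_s}$. Define $\gamma_n=\gamma(\delta^{n-1}+\delta^{n-2}d+\cdots+d^{n-1})$. *)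

theory Defs
  imports "HOL-Analysis.Analysis"
begin

definition has_expansion1 :: "(nat \<Rightarrow> complex) \<Rightarrow> (complex \<Rightarrow> complex) \<Rightarrow> bool" where
  "has_expansion1 a p \<longleftrightarrow>
     (\<exists>r>0. \<forall>z. norm z < r \<longrightarrow> ((\<lambda>k. a k * z ^ k) has_sum p z) UNIV)"

definition has_expansion2 :: "(nat \<Rightarrow> nat \<Rightarrow> complex) \<Rightarrow> (complex \<Rightarrow> complex \<Rightarrow> complex) \<Rightarrow> bool" where
  "has_expansion2 c g \<longleftrightarrow>
     (\<exists>r>0. \<forall>z w. norm z < r \<longrightarrow> norm w < r \<longrightarrow>
        ((\<lambda>(i,j). c i j * z ^ i * w ^ j) has_sum g z w) UNIV)"

definition germ_coeffs :: "(complex \<Rightarrow> complex \<Rightarrow> complex) \<Rightarrow> nat \<Rightarrow> nat \<Rightarrow> complex" where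
  "germ_coeffs g = (SOME c. has_expansion2 c g)"

definition newton_polygon :: "(nat \<Rightarrow> nat \<Rightarrow> complex) \<Rightarrow> (real \<times> real) set" where
  "newton_polygon c = convex hull
     (\<Union>{ {(x,y). x \<ge> real i \<and> y \<ge> real j} | i j. c i j \<noteq> 0 })"

definition np_vertices :: "(nat \<Rightarrow> nat \<Rightarrow> complex) \<Rightarrow> (real \<times> real) set" where
  "np_vertices c = {v. v extreme_point_of newton_polygon c}"

text \<open>Second component Q^n of the iterate f^n = (p^n, Q^n) of f = (p,q), n \<ge> 1:
  Q^1 = q, Q^(n+1)(z,w) = q(p^n z, Q^n(z,w)).\<close>
fun skewQ :: "(complex \<Rightarrow> complex) \<Rightarrow> (complex \<Rightarrow> complex \<Rightarrow> complex) \<Rightarrow> nat \<Rightarrow> complex \<Rightarrow> complex \<Rightarrow> complex" where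
  "skewQ p q 0 z w = w"
| "skewQ p q (Suc n) z w = q ((p ^^ n) z) (skewQ p q n z w)"

definition y_intercept :: "real \<times> real \<Rightarrow> real \<times> real \<Rightarrow> real" where
  "y_intercept P1 P2 = snd P1 - (snd P2 - snd P1) / (fst P2 - fst P1) * fst P1"

definition slope :: "real \<times> real \<Rightarrow> real \<times> real \<Rightarrow> real" where
  "slope P1 P2 = (snd P2 - snd P1) / (fst P2 - fst P1)"

definition preceding_vertex :: "(nat \<Rightarrow> nat \<Rightarrow> complex) \<Rightarrow> real \<times> real \<Rightarrow> real \<times> real \<Rightarrow> bool" where
  "preceding_vertex c P V \<longleftrightarrow> P \<in> np_vertices c \<and> V \<in> np_vertices c \<and> fst P < fst V \<and>
     (\<forall>X \<in> np_vertices c. \<not> (fst P < fst X \<and> fst X < fst V))"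

end

theory Submission
  imports Defs "HOL-Complex_Analysis.Cauchy_Integral_Formula"
begin


lemma np_conv: "convex (newton_polygon c)"
  unfolding newton_polygon_def by (rule convex_convex_hull)

lemma np_quad:
  assumes "c i j \<noteq> 0" "s \<ge> 0" "t \<ge> 0"
  shows "(real i + s, real j + t) \<in> newton_polygon c"
proof -
  have m1: "(real i + s, real j + t) \<in> {(x,y). x \<ge> real i \<and> y \<ge> real j}" using assms by simp
  have m2: "{(x,y). x \<ge> real i \<and> y \<ge> real j} \<in> { {(x,y). x \<ge> real i \<and> y \<ge> real j} | i j. c i j \<noteq> 0 }"
    using assms(1) by (intro CollectI exI[of _ i] exI[of _ j]) simp
  have "(real i + s, real j + t) \<in> \<Union>{ {(x,y). x \<ge> real i \<and> y \<ge> real j} | i j. c i j \<noteq> 0 }"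
    using UnionI[OF m2 m1] .
  then show ?thesis unfolding newton_polygon_def by (meson hull_inc)
qed

lemma np_shift:
  assumes "X \<in> newton_polygon c" "s \<ge> 0" "t \<ge> 0"
  shows "(s,t) + X \<in> newton_polygon c"
proof -
  let ?U = "\<Union>{ {(x,y). x \<ge> real i \<and> y \<ge> real j} | i j. c i j \<noteq> 0 }"
  have sub: "(\<lambda>x. (s,t) + x) ` ?U \<subseteq> ?U"
  proof
    fix z assume "z \<in> (\<lambda>x. (s,t) + x) ` ?U"
    then obtain x where x: "x \<in> ?U" "z = (s,t) + x" by blast
    then obtain i j where ij: "c i j \<noteq> 0" "fst x \<ge> real i" "snd x \<ge> real j" by auto
    have "z \<in> {(x,y). x \<ge> real i \<and> y \<ge> real j}" using x ij assms by (cases x) auto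
    then show "z \<in> ?U" using ij(1) by blast
  qed
  have "(s,t) + X \<in> (\<lambda>x. (s,t) + x) ` (convex hull ?U)"
    using assms(1) unfolding newton_polygon_def by blast
  also have "\<dots> = convex hull ((\<lambda>x. (s,t) + x) ` ?U)" by (simp add: convex_hull_translation)
  also have "\<dots> \<subseteq> convex hull ?U" using sub by (rule hull_mono)
  finally show ?thesis unfolding newton_polygon_def .
qed

lemma np_lower:
  assumes "\<And>i j. c i j \<noteq> 0 \<Longrightarrow> m \<le> \<alpha> * real i + \<beta> * real j" "\<alpha> \<ge> 0" "\<beta> \<ge> 0"
    and "X \<in> newton_polygon c"
  shows "m \<le> \<alpha> * fst X + \<beta> * snd X"
proof -
  let ?U = "\<Union>{ {(x,y). x \<ge> real i \<and> y \<ge> real j} | i j. c i j \<noteq> 0 }"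
  let ?H = "{X::real\<times>real. m \<le> \<alpha> * fst X + \<beta> * snd X}"
  have "?H = {X. inner (\<alpha>,\<beta>) X \<ge> m}" by (auto simp: inner_Pair_0 inner_prod_def)
  then have cH: "convex ?H" by (simp add: convex_halfspace_ge)
  have "?U \<subseteq> ?H"
  proof
    fix z assume "z \<in> ?U"
    then obtain i j where ij: "c i j \<noteq> 0" "fst z \<ge> real i" "snd z \<ge> real j" by auto
    have "m \<le> \<alpha> * real i + \<beta> * real j" using assms(1) ij(1) .
    also have "\<dots> \<le> \<alpha> * fst z + \<beta> * snd z"
      using ij assms(2,3) by (intro add_mono mult_left_mono) auto
    finally show "z \<in> ?H" by simp
  qed
  then have "convex hull ?U \<subseteq> ?H" using cH by (simp add: hull_minimal)
  then show ?thesis using assms(4) unfolding newton_polygon_def by blast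
qed

lemma pin_extreme:
  fixes S :: "(real \<times> real) set"
  assumes "X \<in> S"
    and h1: "\<And>Y. Y \<in> S \<Longrightarrow> a1 * fst X + b1 * snd X \<le> a1 * fst Y + b1 * snd Y"
    and h2: "\<And>Y. Y \<in> S \<Longrightarrow> a2 * fst X + b2 * snd X \<le> a2 * fst Y + b2 * snd Y"
    and det: "a1 * b2 \<noteq> a2 * b1"
  shows "X extreme_point_of S"
  unfolding extreme_point_of_def
proof (intro conjI ballI notI)
  show "X \<in> S" by fact
  fix P Q assume P: "P \<in> S" and Q: "Q \<in> S" and XPQ: "X \<in> open_segment P Q"
  then obtain t where t: "0 < t" "t < 1" "X = (1 - t) *\<^sub>R P + t *\<^sub>R Q" and PQ: "P \<noteq> Q"
    by (auto simp: in_segment)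
  have fx: "fst X = (1-t) * fst P + t * fst Q" and sx: "snd X = (1-t) * snd P + t * snd Q"
    using t by auto
  have e: "a * fst X + b * snd X = a * fst P + b * snd P"
    if "\<And>Y. Y \<in> S \<Longrightarrow> a * fst X + b * snd X \<le> a * fst Y + b * snd Y" for a b
  proof -
    have 1: "a * fst X + b * snd X \<le> a * fst P + b * snd P" using that P by blast
    have 2: "a * fst X + b * snd X \<le> a * fst Q + b * snd Q" using that Q by blast
    have 3: "a * fst X + b * snd X = (1-t) * (a * fst P + b * snd P) + t * (a * fst Q + b * snd Q)"
      unfolding fx sx by (simp add: algebra_simps)
    show ?thesis
    proof (rule ccontr)
      assume "a * fst X + b * snd X \<noteq> a * fst P + b * snd P"
      then have "a * fst X + b * snd X < a * fst P + b * snd P" using 1 by simp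
      then have "(1-t) * (a * fst X + b * snd X) < (1-t) * (a * fst P + b * snd P)" using t by simp
      moreover have "t * (a * fst X + b * snd X) \<le> t * (a * fst Q + b * snd Q)" using 2 t by simp
      ultimately show False using 3 by (simp add: algebra_simps)
    qed
  qed
  have e1: "a1 * (fst X - fst P) + b1 * (snd X - snd P) = 0" using e[OF h1] by (simp add: algebra_simps)
  have e2: "a2 * (fst X - fst P) + b2 * (snd X - snd P) = 0" using e[OF h2] by (simp add: algebra_simps)
  have "(a1 * b2 - a2 * b1) * (fst X - fst P) = b2 * (a1 * (fst X - fst P) + b1 * (snd X - snd P)) - b1 * (a2 * (fst X - fst P) + b2 * (snd X - snd P))"
    by (simp add: algebra_simps)
  then have "(a1 * b2 - a2 * b1) * (fst X - fst P) = 0" using e1 e2 by simp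
  then have x: "fst X = fst P" using det by simp
  have "(a1 * b2 - a2 * b1) * (snd X - snd P) = a1 * (a2 * (fst X - fst P) + b2 * (snd X - snd P)) - a2 * (a1 * (fst X - fst P) + b1 * (snd X - snd P))"
    by (simp add: algebra_simps)
  then have "(a1 * b2 - a2 * b1) * (snd X - snd P) = 0" using e1 e2 by simp
  then have y: "snd X = snd P" using det by simp
  have "X = P" using x y by (simp add: prod_eq_iff)
  then show False using XPQ by (simp add: open_segment_def)
qed

lemma not_extreme_shift:
  assumes "Y \<in> newton_polygon c" "s \<ge> 0" "t \<ge> 0" "(s,t) \<noteq> (0,0)"
  shows "\<not> ((s,t) + Y) extreme_point_of newton_polygon c"
proof
  assume ex: "((s,t) + Y) extreme_point_of newton_polygon c"
  have Z: "(2 * s, 2 * t) + Y \<in> newton_polygon c" using np_shift assms by simp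
  have "(s,t) + Y \<in> open_segment Y ((2 * s, 2 * t) + Y)"
    unfolding in_segment using assms(4)
    by (intro conjI exI[of _ "1/2"]) (auto simp: prod_eq_iff algebra_simps)
  then show False using ex assms(1) Z unfolding extreme_point_of_def by blast
qed

lemma vertex_support:
  assumes "X \<in> np_vertices c"
  shows "\<exists>i j. X = (real i, real j) \<and> c i j \<noteq> 0"
proof -
  let ?U = "\<Union>{ {(x,y). x \<ge> real i \<and> y \<ge> real j} | i j. c i j \<noteq> 0 }"
  have ex: "X extreme_point_of newton_polygon c" using assms by (simp add: np_vertices_def)
  then have "X \<in> ?U" unfolding newton_polygon_def by (rule extreme_point_of_convex_hull)
  then obtain i j where ij: "c i j \<noteq> 0" "fst X \<ge> real i" "snd X \<ge> real j" by auto
  have Y: "(real i, real j) \<in> newton_polygon c" using np_quad[of c i j 0 0] ij(1) by simp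
  have "X = (fst X - real i, snd X - real j) + (real i, real j)" by simp
  moreover have "(fst X - real i, snd X - real j) = (0,0)"
  proof (rule ccontr)
    assume "(fst X - real i, snd X - real j) \<noteq> (0,0)"
    then have "\<not> ((fst X - real i, snd X - real j) + (real i, real j)) extreme_point_of newton_polygon c"
      by (intro not_extreme_shift[OF Y]) (use ij in auto)
    moreover have "(fst X - real i, snd X - real j) + (real i, real j) = X" by (simp add: prod_eq_iff)
    ultimately show False using ex by simp
  qed
  ultimately show ?thesis using ij by auto
qed

lemma nat_to_real_ineq:
  assumes "(m::nat) \<le> a * i + b * j"
  shows "real m \<le> real a * real i + real b * real j"
  using assms by (metis of_nat_add of_nat_le_iff of_nat_mult)

lemma np_conclusion:
  fixes c :: "nat \<Rightarrow> nat \<Rightarrow> complex" and ku kv L x1 y1 x2 y2 :: nat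
  assumes ku: "ku > 0" and kv: "kv > 0" and x12: "x1 < x2"
    and l1: "kv * x1 + ku * y1 = L" and l2: "kv * x2 + ku * y2 = L"
    and c1: "c x1 y1 \<noteq> 0" and c2: "c x2 y2 \<noteq> 0"
    and sup: "\<And>k l. c k l \<noteq> 0 \<Longrightarrow> L \<le> kv * k + ku * l \<and> (kv * k + ku * l = L \<longrightarrow> x1 \<le> k \<and> k \<le> x2)"
  shows "preceding_vertex c (real x1, real y1) (real x2, real y2)"
proof -
  let ?N = "newton_polygon c"
  have P: "(real x1, real y1) \<in> ?N" using np_quad[of c x1 y1 0 0] c1 by simp
  have V: "(real x2, real y2) \<in> ?N" using np_quad[of c x2 y2 0 0] c2 by simp
  have lowL: "real L \<le> real kv * fst Y + real ku * snd Y" if "Y \<in> ?N" for Y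
    apply (rule np_lower[OF _ _ _ that]) apply (rule nat_to_real_ineq) using sup apply blast by simp_all
  have l1r: "real kv * real x1 + real ku * real y1 = real L" using l1 by (metis of_nat_add of_nat_mult)
  have l2r: "real kv * real x2 + real ku * real y2 = real L" using l2 by (metis of_nat_add of_nat_mult)
  define M where "M = y2 + 1"
  have supV: "M * L + y2 \<le> (M * kv) * k + (M * ku + 1) * l" if "c k l \<noteq> 0" for k l
  proof -
    have s: "L \<le> kv * k + ku * l" "kv * k + ku * l = L \<longrightarrow> x1 \<le> k \<and> k \<le> x2" using sup[OF that] by auto
    show ?thesis
    proof (cases "kv * k + ku * l = L")
      case True
      then have "k \<le> x2" using s by auto
      then have "kv * k \<le> kv * x2" by simp
      then have "ku * y2 \<le> ku * l" using True l2 by linarith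
      then have "y2 \<le> l" using ku by simp
      then show ?thesis by (subst True[symmetric]) (simp add: algebra_simps)
    next
      case False
      then have "L + 1 \<le> kv * k + ku * l" using s by linarith
      then have "M * (L+1) \<le> M * (kv * k+ku * l)" by (rule mult_le_mono2)
      moreover have "M * (L+1) = M * L + y2 + 1" unfolding M_def by simp
      moreover have "M * (kv * k+ku * l) \<le> (M * kv) * k + (M * ku + 1) * l" by (simp add: algebra_simps)
      ultimately show ?thesis by linarith
    qed
  qed
  have Vex: "(real x2, real y2) extreme_point_of ?N"
  proof (rule pin_extreme[OF V, of "real kv" "real ku" "real (M * kv)" "real (M * ku+1)"])
    fix Y assume "Y \<in> ?N" then show "real kv * fst (real x2, real y2) + real ku * snd (real x2, real y2) \<le> real kv * fst Y + real ku * snd Y"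
      using lowL l2r by simp
  next
    fix Y assume Y: "Y \<in> ?N"
    have "real (M * L + y2) \<le> real (M * kv) * fst Y + real (M * ku+1) * snd Y"
      apply (rule np_lower[OF _ _ _ Y]) apply (rule nat_to_real_ineq, erule supV) by simp_all
    moreover have "real (M * L + y2) = real (M * kv) * real x2 + real (M * ku+1) * real y2"
      by (simp add: algebra_simps flip: l2r)
    ultimately show "real (M * kv) * fst (real x2, real y2) + real (M * ku+1) * snd (real x2, real y2) \<le> real (M * kv) * fst Y + real (M * ku+1) * snd Y"
      by simp
  next
    show "real kv * real (M * ku+1) \<noteq> real (M * kv) * real ku" using kv by (simp add: algebra_simps)
  qed
  define M' where "M' = x1 + 1"
  have supP: "M'*L + x1 \<le> (M'*kv + 1) * k + (M'*ku) * l" if "c k l \<noteq> 0" for k l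
  proof -
    have s: "L \<le> kv * k + ku * l" "kv * k + ku * l = L \<longrightarrow> x1 \<le> k \<and> k \<le> x2" using sup[OF that] by auto
    show ?thesis
    proof (cases "kv * k + ku * l = L")
      case True
      then have "x1 \<le> k" using s by auto
      then show ?thesis by (subst True[symmetric]) (simp add: algebra_simps)
    next
      case False
      then have "L + 1 \<le> kv * k + ku * l" using s by linarith
      then have "M' * (L+1) \<le> M' * (kv * k+ku * l)" by (rule mult_le_mono2)
      moreover have "M' * (L+1) = M' * L + x1 + 1" unfolding M'_def by simp
      moreover have "M' * (kv * k+ku * l) \<le> (M' * kv + 1) * k + (M' * ku) * l" by (simp add: algebra_simps)
      ultimately show ?thesis by linarith
    qed
  qed
  have Pex: "(real x1, real y1) extreme_point_of ?N"
  proof (rule pin_extreme[OF P, of "real kv" "real ku" "real (M'*kv+1)" "real (M'*ku)"])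
    fix Y assume "Y \<in> ?N" then show "real kv * fst (real x1, real y1) + real ku * snd (real x1, real y1) \<le> real kv * fst Y + real ku * snd Y"
      using lowL l1r by simp
  next
    fix Y assume Y: "Y \<in> ?N"
    have "real (M'*L + x1) \<le> real (M'*kv+1) * fst Y + real (M'*ku) * snd Y"
      apply (rule np_lower[OF _ _ _ Y]) apply (rule nat_to_real_ineq, erule supP) by simp_all
    moreover have "real (M'*L + x1) = real (M'*kv+1) * real x1 + real (M'*ku) * real y1"
      by (simp add: algebra_simps flip: l1r)
    ultimately show "real (M'*kv+1) * fst (real x1, real y1) + real (M'*ku) * snd (real x1, real y1) \<le> real (M'*kv+1) * fst Y + real (M'*ku) * snd Y"
      by simp
  next
    show "real kv * real (M'*ku) \<noteq> real (M'*kv+1) * real ku" using ku by (simp add: algebra_simps)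
  qed
  have between: False if X: "X \<in> np_vertices c" and xa: "real x1 < fst X" and xb: "fst X < real x2" for X
  proof -
    have Xex: "X extreme_point_of ?N" using X by (simp add: np_vertices_def)
    then have XN: "X \<in> ?N" by (simp add: extreme_point_of_def)
    define t where "t = (fst X - real x1) / (real x2 - real x1)"
    have t: "0 < t" "t < 1" using xa xb unfolding t_def by (auto simp: field_simps)
    define Y where "Y = (1 - t) *\<^sub>R (real x1, real y1) + t *\<^sub>R (real x2, real y2)"
    have YN: "Y \<in> ?N" unfolding Y_def using np_conv[of c] P V t
      by (intro convexD) auto
    have tt: "t * (real x2 - real x1) = fst X - real x1" unfolding t_def using x12 by simp
    have "fst Y = real x1 + t * (real x2 - real x1)" unfolding Y_def by (simp add: algebra_simps)
    then have fY: "fst Y = fst X" using tt by simp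
    have lY: "real kv * fst Y + real ku * snd Y = real L"
    proof -
      have "real kv * fst Y + real ku * snd Y = (1-t) * (real kv * real x1 + real ku * real y1) + t * (real kv * real x2 + real ku * real y2)"
        unfolding Y_def by (simp add: algebra_simps)
      also have "\<dots> = (1-t) * real L + t * real L" using l1r l2r by simp
      finally show ?thesis by (simp add: algebra_simps)
    qed
    have "real L \<le> real kv * fst X + real ku * snd X" using lowL XN by blast
    then have "real ku * snd Y \<le> real ku * snd X" using lY fY by simp
    then have yy: "snd Y \<le> snd X" using ku by simp
    show False
    proof (cases "snd Y = snd X")
      case True
      then have "X = Y" using fY by (simp add: prod_eq_iff)
      moreover have "Y \<in> open_segment (real x1, real y1) (real x2, real y2)"
        unfolding in_segment Y_def using t x12 by auto
      ultimately show False using Xex P V unfolding extreme_point_of_def by blast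
    next
      case False
      then have "X = (0, snd X - snd Y) + Y" using fY by (simp add: prod_eq_iff)
      moreover have "\<not> ((0, snd X - snd Y) + Y) extreme_point_of ?N"
        using not_extreme_shift[OF YN, of 0 "snd X - snd Y"] yy False by simp
      ultimately show False using Xex by simp
    qed
  qed
  show ?thesis unfolding preceding_vertex_def np_vertices_def
    using Pex Vex x12 between unfolding np_vertices_def by auto
qed


lemma collinear_pt:
  fixes P1 P3 P2 :: "real \<times> real" and a b K t :: real
  assumes b: "b > 0" and e1: "a * fst P1 + b * snd P1 = K" and e2: "a * fst P2 + b * snd P2 = K"
    and e3: "a * fst P3 + b * snd P3 = K" and x: "fst P2 = (1-t) * fst P1 + t * fst P3"
  shows "P2 = (1-t) *\<^sub>R P1 + t *\<^sub>R P3"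
proof -
  have "b * snd P2 = K - a * fst P2" using e2 by simp
  also have "\<dots> = (1-t) * (K - a * fst P1) + t * (K - a * fst P3)" unfolding x by (simp add: algebra_simps)
  also have "\<dots> = b * ((1-t) * snd P1 + t * snd P3)"
  proof -
    have h1: "K - a * fst P1 = b * snd P1" using e1 by simp
    have h3: "K - a * fst P3 = b * snd P3" using e3 by simp
    show ?thesis unfolding h1 h3 by (simp add: algebra_simps)
  qed
  finally have "snd P2 = (1-t) * snd P1 + t * snd P3" using b by simp
  then show ?thesis using x by (simp add: prod_eq_iff)
qed

lemma base_facts:
  fixes c :: "nat \<Rightarrow> nat \<Rightarrow> complex" and A B \<gamma> d :: nat
  assumes last_vertex: "(real \<gamma>, real d) \<in> np_vertices c"
    and last_max: "\<forall>X \<in> np_vertices c. fst X \<le> real \<gamma>"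
    and prev_vertex: "preceding_vertex c (real A, real B) (real \<gamma>, real d)"
  shows "A < \<gamma> \<and> d < B \<and> c A B \<noteq> 0 \<and> c \<gamma> d \<noteq> 0
     \<and> (\<forall>k l. c k l \<noteq> 0 \<longrightarrow> (B - d) * A + (\<gamma> - A) * B \<le> (B - d) * k + (\<gamma> - A) * l
          \<and> ((B - d) * k + (\<gamma> - A) * l = (B - d) * A + (\<gamma> - A) * B \<longrightarrow> A \<le> k \<and> k \<le> \<gamma>))
     \<and> (\<forall>k l. c k l \<noteq> 0 \<longrightarrow> d \<le> l)"
proof -
  let ?N = "newton_polygon c"
  have Pv: "(real A, real B) \<in> np_vertices c" and Vv: "(real \<gamma>, real d) \<in> np_vertices c"
    and Ag: "A < \<gamma>" and nb: "\<And>X. X \<in> np_vertices c \<Longrightarrow> \<not> (real A < fst X \<and> fst X < real \<gamma>)"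
    using prev_vertex unfolding preceding_vertex_def by auto
  have Pex: "(real A, real B) extreme_point_of ?N" and Vex: "(real \<gamma>, real d) extreme_point_of ?N"
    using Pv Vv by (auto simp: np_vertices_def)
  have PN: "(real A, real B) \<in> ?N" and VN: "(real \<gamma>, real d) \<in> ?N"
    using Pex Vex by (auto simp: extreme_point_of_def)
  have cAB: "c A B \<noteq> 0"
    using vertex_support[OF Pv] by auto
  have cgd: "c \<gamma> d \<noteq> 0"
    using vertex_support[OF Vv] by auto
  have dB: "d < B"
  proof (rule ccontr)
    assume "\<not> d < B"
    then have "(real \<gamma>, real d) = (real \<gamma> - real A, real d - real B) + (real A, real B)" by simp
    moreover have "\<not> ((real \<gamma> - real A, real d - real B) + (real A, real B)) extreme_point_of ?N"
      by (rule not_extreme_shift[OF PN]) (use Ag \<open>\<not> d < B\<close> in auto)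
    ultimately show False using Vex by simp
  qed
  define ku where "ku = \<gamma> - A"
  define kv where "kv = B - d"
  have ku: "ku > 0" and kv: "kv > 0" using Ag dB unfolding ku_def kv_def by auto
  define K where "K = kv * A + ku * B"
  have K2: "K = kv * \<gamma> + ku * d" unfolding K_def ku_def kv_def using Ag dB
    by (simp add: algebra_simps diff_mult_distrib diff_mult_distrib2)
  have Kr1: "real kv * real A + real ku * real B = real K" unfolding K_def by simp
  have Kr2: "real kv * real \<gamma> + real ku * real d = real K" unfolding K2 by simp
  have lower: "K \<le> kv * k + ku * l" if ckl: "c k l \<noteq> 0" for k l
  proof (rule ccontr)
    assume nl: "\<not> K \<le> kv * k + ku * l"
    define m where "m = (LEAST m. \<exists>k l. c k l \<noteq> 0 \<and> kv * k + ku * l = m)"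
    have mex: "\<exists>k l. c k l \<noteq> 0 \<and> kv * k + ku * l = m" unfolding m_def
      by (rule LeastI[of _ "kv * k + ku * l"]) (use ckl in blast)
    have mle: "m \<le> kv * k' + ku * l'" if "c k' l' \<noteq> 0" for k' l'
      unfolding m_def by (rule Least_le) (use that in blast)
    have mK: "m < K" using mle[OF ckl] nl by simp
    define i0 where "i0 = (GREATEST i. \<exists>l. c i l \<noteq> 0 \<and> kv * i + ku * l = m)"
    have ibound: "i \<le> m" if asm: "\<exists>l. c i l \<noteq> 0 \<and> kv * i + ku * l = m" for i
    proof -
      obtain l where "kv * i + ku * l = m" using asm by blast
      moreover have "i \<le> kv * i" using kv by simp
      ultimately show ?thesis by linarith
    qed
    from mex obtain k1 l1 where k1: "c k1 l1 \<noteq> 0" "kv * k1 + ku * l1 = m" by blast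
    have i0ex: "\<exists>l. c i0 l \<noteq> 0 \<and> kv * i0 + ku * l = m"
      unfolding i0_def
    proof (rule GreatestI_nat[where b=m])
      show "\<exists>l. c k1 l \<noteq> 0 \<and> kv * k1 + ku * l = m" using k1 by blast
    qed (rule ibound)
    have i0ge: "i \<le> i0" if asm: "\<exists>l. c i l \<noteq> 0 \<and> kv * i + ku * l = m" for i
      unfolding i0_def by (rule Greatest_le_nat[where b=m]) (rule asm, rule ibound)
    obtain j0 where j0: "c i0 j0 \<noteq> 0" "kv * i0 + ku * j0 = m" using i0ex by blast
    have XN: "(real i0, real j0) \<in> ?N" using np_quad[of c i0 j0 0 0] j0 by simp
    have sup2: "int ((m+1) * m) - int i0 \<le> int ((m+1) * kv) * int k' - int k' + int ((m+1) * ku) * int l'"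
      if "c k' l' \<noteq> 0" for k' l'
    proof (cases "kv * k' + ku * l' = m")
      case True
      then have "k' \<le> i0" using i0ge that by blast
      then show ?thesis using True by (simp add: algebra_simps flip: True)
    next
      case False
      then have ge: "m + 1 \<le> kv * k' + ku * l'" using mle[OF that] by simp
      have "k' \<le> kv * k'" using kv by simp
      then have kk: "k' \<le> kv * k' + ku * l'" by linarith
      have "(m+1) * m \<le> m * (kv * k' + ku * l')" using ge by (metis mult.commute mult_le_mono2)
      then have "int ((m+1) * m) \<le> int m * int (kv * k' + ku * l')" by (metis of_nat_le_iff of_nat_mult)
      moreover have "int ((m+1) * kv) * int k' - int k' + int ((m+1) * ku) * int l' = int m * int (kv * k' + ku * l') + (int (kv * k' + ku * l') - int k')"
        by (simp add: algebra_simps)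
      moreover have "int k' \<le> int (kv * k' + ku * l')" using kk by linarith
      ultimately show ?thesis by linarith
    qed
    have Xex: "(real i0, real j0) extreme_point_of ?N"
    proof (rule pin_extreme[OF XN, of "real kv" "real ku" "real ((m+1) * kv) - 1" "real ((m+1) * ku)"])
      fix Y assume Y: "Y \<in> ?N"
      have "real m \<le> real kv * fst Y + real ku * snd Y"
        apply (rule np_lower[OF _ _ _ Y]) apply (rule nat_to_real_ineq, erule mle) by simp_all
      then show "real kv * fst (real i0, real j0) + real ku * snd (real i0, real j0) \<le> real kv * fst Y + real ku * snd Y"
        by (simp flip: j0(2))
    next
      fix Y assume Y: "Y \<in> ?N"
      have "real ((m+1) * m) - real i0 \<le> (real ((m+1) * kv) - 1) * fst Y + real ((m+1) * ku) * snd Y"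
      proof (rule np_lower[OF _ _ _ Y])
        fix i j assume "c i j \<noteq> 0"
        then have "int ((m+1) * m) - int i0 \<le> int ((m+1) * kv) * int i - int i + int ((m+1) * ku) * int j"
          by (rule sup2)
        then have "real_of_int (int ((m+1) * m) - int i0) \<le> real_of_int (int ((m+1) * kv) * int i - int i + int ((m+1) * ku) * int j)"
          by (simp only: of_int_le_iff)
        then show "real ((m+1) * m) - real i0 \<le> (real ((m+1) * kv) - 1) * real i + real ((m+1) * ku) * real j"
          by (simp add: algebra_simps)
      next
        have "1 \<le> (m+1) * kv" using kv by simp
        then have "1 \<le> real ((m+1) * kv)" by (metis of_nat_1 of_nat_le_iff)
        then show "0 \<le> real ((m+1) * kv) - 1" by simp
      qed simp
      moreover have "real ((m+1) * m) - real i0 = (real ((m+1) * kv) - 1) * real i0 + real ((m+1) * ku) * real j0"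
      proof -
        have "real m = real kv * real i0 + real ku * real j0" by (simp flip: j0(2))
        then show ?thesis by (simp add: algebra_simps)
      qed
      ultimately show "(real ((m+1) * kv) - 1) * fst (real i0, real j0) + real ((m+1) * ku) * snd (real i0, real j0) \<le> (real ((m+1) * kv) - 1) * fst Y + real ((m+1) * ku) * snd Y"
        by simp
    next
      show "real kv * real ((m+1) * ku) \<noteq> (real ((m+1) * kv) - 1) * real ku" using ku by (simp add: algebra_simps)
    qed
    then have Xv: "(real i0, real j0) \<in> np_vertices c" by (simp add: np_vertices_def)
    have i0g: "i0 \<le> \<gamma>" using last_max Xv by auto
    have mr: "real kv * real i0 + real ku * real j0 = real m" by (simp flip: j0(2))
    show False
    proof (cases "A < i0 \<and> i0 < \<gamma>")
      case True then show False using nb[OF Xv] by simp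
    next
      case False
      show False
      proof (cases "i0 = \<gamma>")
        case True
        then have "kv * \<gamma> + ku * j0 < kv * \<gamma> + ku * d" using j0(2) mK K2 by simp
        then have jd: "j0 < d" by simp
        have "(real \<gamma>, real d) = (0, real d - real j0) + (real i0, real j0)" using True by simp
        moreover have "\<not> ((0, real d - real j0) + (real i0, real j0)) extreme_point_of ?N"
          by (rule not_extreme_shift[OF XN]) (use jd in auto)
        ultimately show False using Vex by simp
      next
        case False
        then have iA: "i0 \<le> A" using \<open>\<not> (A < i0 \<and> i0 < \<gamma>)\<close> i0g by linarith
        define t where "t = (real A - real i0) / (real \<gamma> - real i0)"
        have t: "0 \<le> t" "t < 1" using iA Ag unfolding t_def by (auto simp: field_simps)
        define Y where "Y = (1 - t) *\<^sub>R (real i0, real j0) + t *\<^sub>R (real \<gamma>, real d)"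
        have YN: "Y \<in> ?N" unfolding Y_def using np_conv[of c] XN VN t
          by (intro convexD) auto
        have tt: "t * (real \<gamma> - real i0) = real A - real i0" unfolding t_def using iA Ag by simp
        have "fst Y = real i0 + t * (real \<gamma> - real i0)" unfolding Y_def by (simp add: algebra_simps)
        then have fY: "fst Y = real A" using tt by simp
        have "real kv * fst Y + real ku * snd Y = (1-t) * (real kv * real i0 + real ku * real j0) + t * (real kv * real \<gamma> + real ku * real d)"
          unfolding Y_def by (simp add: algebra_simps)
        also have "\<dots> = (1-t) * real m + t * real K" using mr Kr2 by simp
        also have "\<dots> < real K"
        proof -
          have "(1-t) * real m < (1-t) * real K" using t mK by simp
          then show ?thesis by (simp add: algebra_simps)
        qed
        finally have lt: "real kv * fst Y + real ku * snd Y < real K" .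
        have "real ku * snd Y < real ku * real B" using lt Kr1 unfolding fY by linarith
        then have yB: "snd Y < real B" using ku by simp
        have "(real A, real B) = (0, real B - snd Y) + Y" using fY by (simp add: prod_eq_iff)
        moreover have "\<not> ((0, real B - snd Y) + Y) extreme_point_of ?N"
          by (rule not_extreme_shift[OF YN]) (use yB in auto)
        ultimately show False using Pex by simp
      qed
    qed
  qed
  have range: "A \<le> k \<and> k \<le> \<gamma>" if ckl: "c k l \<noteq> 0" and on: "kv * k + ku * l = K" for k l
  proof (rule ccontr)
    assume "\<not> (A \<le> k \<and> k \<le> \<gamma>)"
    have QN: "(real k, real l) \<in> ?N" using np_quad[of c k l 0 0] ckl by simp
    have onr: "real kv * real k + real ku * real l = real K" by (simp flip: on)
    show False
    proof (cases "k < A")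
      case True
      define t where "t = (real A - real k) / (real \<gamma> - real k)"
      have t: "0 < t" "t < 1" using True Ag unfolding t_def by (auto simp: field_simps)
      have tt: "t * (real \<gamma> - real k) = real A - real k" unfolding t_def using True Ag by simp
      have xe: "real A = (1-t) * real k + t * real \<gamma>" using tt by (simp add: algebra_simps)
      have "(real A, real B) = (1-t) *\<^sub>R (real k, real l) + t *\<^sub>R (real \<gamma>, real d)"
        by (rule collinear_pt[where a="real kv" and b="real ku" and K="real K"]) (use ku onr Kr1 Kr2 xe in simp_all)
      then have "(real A, real B) \<in> open_segment (real k, real l) (real \<gamma>, real d)"
        unfolding in_segment using t True Ag by auto
      then show False using Pex QN VN unfolding extreme_point_of_def by blast
    next
      case False
      then have kg: "\<gamma> < k" using \<open>\<not> (A \<le> k \<and> k \<le> \<gamma>)\<close> by linarith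
      define t where "t = (real \<gamma> - real A) / (real k - real A)"
      have t: "0 < t" "t < 1" using kg Ag unfolding t_def by (auto simp: field_simps)
      have tt: "t * (real k - real A) = real \<gamma> - real A" unfolding t_def using kg Ag by simp
      have xe: "real \<gamma> = (1-t) * real A + t * real k" using tt by (simp add: algebra_simps)
      have "(real \<gamma>, real d) = (1-t) *\<^sub>R (real A, real B) + t *\<^sub>R (real k, real l)"
        by (rule collinear_pt[where a="real kv" and b="real ku" and K="real K"]) (use ku onr Kr1 Kr2 xe in simp_all)
      then have "(real \<gamma>, real d) \<in> open_segment (real A, real B) (real k, real l)"
        unfolding in_segment using t kg Ag by auto
      then show False using Vex QN PN unfolding extreme_point_of_def by blast
    qed
  qed
  have ylow: "d \<le> l" if ckl: "c k l \<noteq> 0" for k l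
  proof (rule ccontr)
    assume nl: "\<not> d \<le> l"
    define j0 where "j0 = (LEAST j. \<exists>i. c i j \<noteq> 0)"
    have j0ex: "\<exists>i. c i j0 \<noteq> 0" unfolding j0_def by (rule LeastI[of _ l]) (use ckl in blast)
    have j0le: "j0 \<le> j" if "c i j \<noteq> 0" for i j unfolding j0_def by (rule Least_le) (use that in blast)
    define i0 where "i0 = (LEAST i. c i j0 \<noteq> 0)"
    have ci0: "c i0 j0 \<noteq> 0" unfolding i0_def by (rule LeastI_ex) (rule j0ex)
    have i0le: "i0 \<le> i" if "c i j0 \<noteq> 0" for i unfolding i0_def by (rule Least_le) (use that in blast)
    have XN: "(real i0, real j0) \<in> ?N" using np_quad[of c i0 j0 0 0] ci0 by simp
    have sup3: "(i0+1) * j0 + i0 \<le> 1 * k' + (i0+1) * l'" if "c k' l' \<noteq> 0" for k' l'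
    proof (cases "l' = j0")
      case True
      then have "i0 \<le> k'" using i0le that by simp
      then show ?thesis using True by simp
    next
      case False
      then have "j0 + 1 \<le> l'" using j0le[OF that] by simp
      then have "(i0+1) * (j0+1) \<le> (i0+1) * l'" by (rule mult_le_mono2)
      then show ?thesis by (simp add: algebra_simps)
    qed
    have Xex: "(real i0, real j0) extreme_point_of ?N"
    proof (rule pin_extreme[OF XN, of 0 1 1 "real (i0+1)"])
      fix Y assume Y: "Y \<in> ?N"
      have "real j0 \<le> 0 * fst Y + 1 * snd Y"
        by (rule np_lower[OF _ _ _ Y]) (use j0le in auto)
      then show "0 * fst (real i0, real j0) + 1 * snd (real i0, real j0) \<le> 0 * fst Y + 1 * snd Y" by simp
    next
      fix Y assume Y: "Y \<in> ?N"
      have "real ((i0+1) * j0 + i0) \<le> real 1 * fst Y + real (i0+1) * snd Y"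
        apply (rule np_lower[OF _ _ _ Y]) apply (rule nat_to_real_ineq, erule sup3) by simp_all
      then show "1 * fst (real i0, real j0) + real (i0+1) * snd (real i0, real j0) \<le> 1 * fst Y + real (i0+1) * snd Y"
        by (simp add: algebra_simps)
    qed simp
    then have Xv: "(real i0, real j0) \<in> np_vertices c" by (simp add: np_vertices_def)
    have i0g: "i0 \<le> \<gamma>" using last_max Xv by auto
    have "j0 < d" using j0le[OF ckl] nl by simp
    then have "ku * j0 < ku * d" using ku by simp
    moreover have "kv * i0 \<le> kv * \<gamma>" using i0g by simp
    ultimately have "kv * i0 + ku * j0 < kv * \<gamma> + ku * d" by linarith
    then show False using lower[OF ci0] K2 by simp
  qed
  show ?thesis using Ag dB cAB cgd lower range ylow unfolding K_def ku_def kv_def by blast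
qed


definition smul :: "(nat \<Rightarrow> nat \<Rightarrow> complex) \<Rightarrow> (nat \<Rightarrow> nat \<Rightarrow> complex) \<Rightarrow> nat \<Rightarrow> nat \<Rightarrow> complex" where
  "smul f g k l = (\<Sum>i\<le>k. \<Sum>j\<le>l. f i j * g (k-i) (l-j))"

definition sone :: "nat \<Rightarrow> nat \<Rightarrow> complex" where
  "sone k l = (if k = 0 \<and> l = 0 then 1 else 0)"

fun spow :: "(nat \<Rightarrow> nat \<Rightarrow> complex) \<Rightarrow> nat \<Rightarrow> nat \<Rightarrow> nat \<Rightarrow> complex" where
  "spow f 0 = sone"
| "spow f (Suc n) = smul f (spow f n)"

definition scomp :: "(nat \<Rightarrow> nat \<Rightarrow> complex) \<Rightarrow> (nat \<Rightarrow> nat \<Rightarrow> complex) \<Rightarrow> (nat \<Rightarrow> nat \<Rightarrow> complex) \<Rightarrow> nat \<Rightarrow> nat \<Rightarrow> complex" where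
  "scomp b P R k l = infsum (\<lambda>(i,j). b i j * smul (spow P i) (spow R j) k l) UNIV"

definition sup_ok :: "nat \<Rightarrow> nat \<Rightarrow> (nat \<Rightarrow> nat \<Rightarrow> complex) \<Rightarrow> nat \<Rightarrow> nat \<Rightarrow> nat \<Rightarrow> bool" where
  "sup_ok kv ku f L x1 x2 \<longleftrightarrow> (\<forall>k l. f k l \<noteq> 0 \<longrightarrow> L \<le> kv * k + ku * l \<and> (kv * k + ku * l = L \<longrightarrow> x1 \<le> k \<and> k \<le> x2))"

lemma sum_single:
  assumes "finite A" "a \<in> A" "\<And>x. x \<in> A \<Longrightarrow> x \<noteq> a \<Longrightarrow> f x = 0"
  shows "sum f A = f a"
proof -
  have "sum f A = f a + sum f (A - {a})" using assms(1,2) by (rule sum.remove)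
  moreover have "sum f (A - {a}) = 0" using assms(3) by (intro sum.neutral) auto
  ultimately show ?thesis by simp
qed

lemma infsum_single_pt:
  assumes "\<And>x. x \<noteq> a \<Longrightarrow> f x = 0"
  shows "infsum f UNIV = (f a :: complex)"
proof -
  have "infsum f UNIV = infsum f {a}"
    by (rule infsum_cong_neutral) (use assms in auto)
  then show ?thesis by simp
qed

lemma infsum_nonzero:
  assumes "infsum f A \<noteq> (0::complex)"
  shows "\<exists>x\<in>A. f x \<noteq> 0"
proof (rule ccontr)
  assume "\<not> (\<exists>x\<in>A. f x \<noteq> 0)"
  then have "infsum f A = infsum (\<lambda>_. 0) A" by (intro infsum_cong) auto
  then show False using assms by simp
qed

lemma smul_nonzero:
  assumes "smul f g k l \<noteq> 0"
  shows "\<exists>i j. i \<le> k \<and> j \<le> l \<and> f i j \<noteq> 0 \<and> g (k-i) (l-j) \<noteq> 0"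
proof -
  obtain i where i: "i \<in> {..k}" "(\<Sum>j\<le>l. f i j * g (k-i) (l-j)) \<noteq> 0"
    using assms unfolding smul_def by (meson sum.not_neutral_contains_not_neutral)
  obtain j where j: "j \<in> {..l}" "f i j * g (k-i) (l-j) \<noteq> 0"
    using i(2) by (meson sum.not_neutral_contains_not_neutral)
  show ?thesis using i j by auto
qed

lemma sup_one: "sup_ok kv ku sone 0 0 0"
  unfolding sup_ok_def sone_def by auto

lemma sup_mul:
  assumes f: "sup_ok kv ku f L1 a1 b1" and g: "sup_ok kv ku g L2 a2 b2"
  shows "sup_ok kv ku (smul f g) (L1+L2) (a1+a2) (b1+b2)"
  unfolding sup_ok_def
proof (intro allI impI)
  fix k l assume "smul f g k l \<noteq> 0"
  then obtain i j where ij: "i \<le> k" "j \<le> l" "f i j \<noteq> 0" "g (k-i) (l-j) \<noteq> 0"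
    using smul_nonzero by blast
  have F: "L1 \<le> kv * i + ku * j" "kv * i + ku * j = L1 \<longrightarrow> a1 \<le> i \<and> i \<le> b1"
    using f ij(3) unfolding sup_ok_def by auto
  have G: "L2 \<le> kv * (k-i) + ku * (l-j)" "kv * (k-i) + ku * (l-j) = L2 \<longrightarrow> a2 \<le> k-i \<and> k-i \<le> b2"
    using g ij(4) unfolding sup_ok_def by auto
  have e: "kv * k + ku * l = (kv * i + ku * j) + (kv * (k-i) + ku * (l-j))"
  proof -
    obtain k' l' where "k = i + k'" "l = j + l'" using ij(1,2) le_Suc_ex by blast
    then show ?thesis by (simp add: algebra_simps)
  qed
  show "L1 + L2 \<le> kv * k + ku * l \<and> (kv * k + ku * l = L1 + L2 \<longrightarrow> a1 + a2 \<le> k \<and> k \<le> b1 + b2)"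
  proof (intro conjI impI)
    show "L1 + L2 \<le> kv * k + ku * l" using e F(1) G(1) by linarith
  next
    assume "kv * k + ku * l = L1 + L2"
    then have "kv * i + ku * j = L1" "kv * (k-i) + ku * (l-j) = L2" using e F(1) G(1) by linarith+
    then show "a1 + a2 \<le> k" "k \<le> b1 + b2" using F(2) G(2) ij(1) by auto
  qed
qed

lemma mul_end:
  assumes f: "sup_ok kv ku f L1 a1 b1" and g: "sup_ok kv ku g L2 a2 b2" and ku: "ku > 0"
    and p1: "kv * x1 + ku * y1 = L1" and p2: "kv * x2 + ku * y2 = L2"
    and ends: "(x1 = a1 \<and> x2 = a2) \<or> (x1 = b1 \<and> x2 = b2)"
  shows "smul f g (x1+x2) (y1+y2) = f x1 y1 * g x2 y2"
proof -
  have z: "f i j * g (x1+x2-i) (y1+y2-j) = 0"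
    if ij: "i \<le> x1+x2" "j \<le> y1+y2" "(i,j) \<noteq> (x1,y1)" for i j
  proof (rule ccontr)
    assume "f i j * g (x1+x2-i) (y1+y2-j) \<noteq> 0"
    then have nz: "f i j \<noteq> 0" "g (x1+x2-i) (y1+y2-j) \<noteq> 0" by auto
    have F: "L1 \<le> kv * i + ku * j" "kv * i + ku * j = L1 \<longrightarrow> a1 \<le> i \<and> i \<le> b1"
      using f nz(1) unfolding sup_ok_def by auto
    have G: "L2 \<le> kv * (x1+x2-i) + ku * (y1+y2-j)" "kv * (x1+x2-i) + ku * (y1+y2-j) = L2 \<longrightarrow> a2 \<le> x1+x2-i \<and> x1+x2-i \<le> b2"
      using g nz(2) unfolding sup_ok_def by auto
    have e: "kv * (x1+x2) + ku * (y1+y2) = (kv * i + ku * j) + (kv * (x1+x2-i) + ku * (y1+y2-j))"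
    proof -
      obtain k' l' where "x1+x2 = i + k'" "y1+y2 = j + l'" using ij(1,2) le_Suc_ex by blast
      then show ?thesis by (simp add: algebra_simps)
    qed
    have e2: "kv * (x1+x2) + ku * (y1+y2) = L1 + L2" using p1 p2 by (simp add: algebra_simps)
    have l1: "kv * i + ku * j = L1" and l2: "kv * (x1+x2-i) + ku * (y1+y2-j) = L2"
      using e e2 F(1) G(1) by linarith+
    have "i = x1" using F(2) G(2) l1 l2 ends ij(1) by auto
    then have "kv * x1 + ku * j = L1" using l1 by simp
    then have "ku * j = ku * y1" using p1 by linarith
    then have "j = y1" using ku by simp
    then show False using \<open>i = x1\<close> ij(3) by simp
  qed
  have "smul f g (x1+x2) (y1+y2) = (\<Sum>j\<le>y1+y2. f x1 j * g (x1+x2-x1) (y1+y2-j))"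
    unfolding smul_def
  proof (rule sum_single)
    fix i assume "i \<in> {..x1+x2}" "i \<noteq> x1"
    then show "(\<Sum>j\<le>y1+y2. f i j * g (x1+x2-i) (y1+y2-j)) = 0"
      using z by (intro sum.neutral) auto
  qed auto
  also have "\<dots> = f x1 y1 * g (x1+x2-x1) (y1+y2-y1)"
  proof (rule sum_single)
    fix j assume "j \<in> {..y1+y2}" "j \<noteq> y1"
    then show "f x1 j * g (x1+x2-x1) (y1+y2-j) = 0" using z[of x1 j] by simp
  qed auto
  finally show ?thesis by simp
qed

lemma sup_pow:
  assumes "sup_ok kv ku f L a b"
  shows "sup_ok kv ku (spow f n) (n*L) (n*a) (n*b)"
proof (induction n)
  case 0 then show ?case using sup_one by simp
next
  case (Suc n)
  have "sup_ok kv ku (smul f (spow f n)) (L + n*L) (a + n*a) (b + n*b)"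
    by (rule sup_mul[OF assms Suc])
  then show ?case by simp
qed

lemma pow_end:
  assumes f: "sup_ok kv ku f L a b" and ku: "ku > 0" and p: "kv * x + ku * y = L"
    and ends: "x = a \<or> x = b"
  shows "spow f n (n*x) (n*y) = f x y ^ n"
proof (induction n)
  case 0 then show ?case by (simp add: sone_def)
next
  case (Suc n)
  have "spow f (Suc n) (Suc n * x) (Suc n * y) = smul f (spow f n) (x + n*x) (y + n*y)" by simp
  also have "\<dots> = f x y * spow f n (n*x) (n*y)"
  proof (rule mul_end[OF f sup_pow[OF f, of n] ku p])
    show "kv * (n*x) + ku * (n*y) = n*L" using p by (simp add: algebra_simps flip: p)
    show "x = a \<and> n * x = n * a \<or> x = b \<and> n * x = n * b" using ends by auto
  qed
  finally show ?case using Suc by simp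
qed

lemma sup_term:
  assumes P: "sup_ok kv ku P LP aP bP" and R: "sup_ok kv ku R LR aR bR"
  shows "sup_ok kv ku (smul (spow P i) (spow R j)) (i*LP + j*LR) (i*aP + j*aR) (i*bP + j*bR)"
  by (rule sup_mul[OF sup_pow[OF P] sup_pow[OF R]])

lemma sup_comp:
  assumes P: "sup_ok kv ku P LP aP bP" and R: "sup_ok kv ku R LR aR bR"
    and cond: "\<And>i j. b i j \<noteq> 0 \<Longrightarrow> M \<le> i*LP + j*LR \<and> (i*LP + j*LR = M \<longrightarrow> lo \<le> i*aP + j*aR \<and> i*bP + j*bR \<le> hi)"
  shows "sup_ok kv ku (scomp b P R) M lo hi"
  unfolding sup_ok_def
proof (intro allI impI)
  fix k l assume "scomp b P R k l \<noteq> 0"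
  then obtain ij where "(case ij of (i,j) \<Rightarrow> b i j * smul (spow P i) (spow R j) k l) \<noteq> 0"
    unfolding scomp_def using infsum_nonzero by blast
  then obtain i j where nz: "b i j \<noteq> 0" "smul (spow P i) (spow R j) k l \<noteq> 0" by (cases ij) auto
  have T: "i*LP + j*LR \<le> kv * k + ku * l" "kv * k + ku * l = i*LP + j*LR \<longrightarrow> i*aP + j*aR \<le> k \<and> k \<le> i*bP + j*bR"
    using sup_term[OF P R, of i j] nz(2) unfolding sup_ok_def by blast+
  have Cn: "M \<le> i*LP + j*LR" "i*LP + j*LR = M \<longrightarrow> lo \<le> i*aP + j*aR \<and> i*bP + j*bR \<le> hi" using cond[OF nz(1)] by auto
  show "M \<le> kv * k + ku * l \<and> (kv * k + ku * l = M \<longrightarrow> lo \<le> k \<and> k \<le> hi)"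
  proof (intro conjI impI)
    show "M \<le> kv * k + ku * l" using T(1) Cn(1) by linarith
  next
    assume "kv * k + ku * l = M"
    then have "i*LP + j*LR = M" using T(1) Cn(1) by linarith
    then show "lo \<le> k" "k \<le> hi" using T(2) Cn(2) \<open>kv * k + ku * l = M\<close> by auto
  qed
qed

lemma comp_end:
  assumes P: "sup_ok kv ku P LP aP bP" and R: "sup_ok kv ku R LR aR bR" and ku: "ku > 0"
    and pP: "kv * xP + ku * yP = LP" and pR: "kv * xR + ku * yR = LR"
    and ends: "(xP = aP \<and> xR = aR \<and> (\<forall>i j. b i j \<noteq> 0 \<longrightarrow> i*LP + j*LR = M \<longrightarrow> (i,j) \<noteq> (i0,j0) \<longrightarrow> i0*aP + j0*aR < i*aP + j*aR))
             \<or> (xP = bP \<and> xR = bR \<and> (\<forall>i j. b i j \<noteq> 0 \<longrightarrow> i*LP + j*LR = M \<longrightarrow> (i,j) \<noteq> (i0,j0) \<longrightarrow> i*bP + j*bR < i0*bP + j0*bR))"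
    and cond: "\<And>i j. b i j \<noteq> 0 \<Longrightarrow> M \<le> i*LP + j*LR"
    and lev0: "i0*LP + j0*LR = M"
  shows "scomp b P R (i0*xP + j0*xR) (i0*yP + j0*yR) = b i0 j0 * P xP yP ^ i0 * R xR yR ^ j0"
proof -
  let ?k = "i0*xP + j0*xR" and ?l = "i0*yP + j0*yR"
  have lev: "kv * ?k + ku * ?l = M" using pP pR lev0 by (simp add: algebra_simps flip: lev0 pP pR)
  have zero: "b i j * smul (spow P i) (spow R j) ?k ?l = 0" if ne: "(i,j) \<noteq> (i0,j0)" for i j
  proof (rule ccontr)
    assume "b i j * smul (spow P i) (spow R j) ?k ?l \<noteq> 0"
    then have nz: "b i j \<noteq> 0" "smul (spow P i) (spow R j) ?k ?l \<noteq> 0" by auto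
    have T: "i*LP + j*LR \<le> kv * ?k + ku * ?l" "kv * ?k + ku * ?l = i*LP + j*LR \<longrightarrow> i*aP + j*aR \<le> ?k \<and> ?k \<le> i*bP + j*bR"
      using sup_term[OF P R, of i j] nz(2) unfolding sup_ok_def by blast+
    have "i*LP + j*LR = M" using T(1) cond[OF nz(1)] lev by linarith
    then have rng: "i*aP + j*aR \<le> ?k" "?k \<le> i*bP + j*bR" using T(2) lev by auto
    note lv = \<open>i*LP + j*LR = M\<close>
    from ends show False
    proof
      assume h: "xP = aP \<and> xR = aR \<and> (\<forall>i j. b i j \<noteq> 0 \<longrightarrow> i*LP + j*LR = M \<longrightarrow> (i,j) \<noteq> (i0,j0) \<longrightarrow> i0*aP + j0*aR < i*aP + j*aR)"
      then have "i0*aP + j0*aR < i*aP + j*aR" using nz(1) lv ne by blast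
      then show False using rng(1) h by simp
    next
      assume h: "xP = bP \<and> xR = bR \<and> (\<forall>i j. b i j \<noteq> 0 \<longrightarrow> i*LP + j*LR = M \<longrightarrow> (i,j) \<noteq> (i0,j0) \<longrightarrow> i*bP + j*bR < i0*bP + j0*bR)"
      then have "i*bP + j*bR < i0*bP + j0*bR" using nz(1) lv ne by blast
      then show False using rng(2) h by simp
    qed
  qed
  have "scomp b P R ?k ?l = (case (i0,j0) of (i,j) \<Rightarrow> b i j * smul (spow P i) (spow R j) ?k ?l)"
    unfolding scomp_def
  proof (rule infsum_single_pt)
    fix x :: "nat \<times> nat" assume "x \<noteq> (i0,j0)"
    then show "(case x of (i,j) \<Rightarrow> b i j * smul (spow P i) (spow R j) ?k ?l) = 0"
      using zero by (cases x) auto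
  qed
  also have "\<dots> = b i0 j0 * (spow P i0 (i0*xP) (i0*yP) * spow R j0 (j0*xR) (j0*yR))"
  proof -
    have "smul (spow P i0) (spow R j0) ?k ?l = spow P i0 (i0*xP) (i0*yP) * spow R j0 (j0*xR) (j0*yR)"
    proof (rule mul_end[OF sup_pow[OF P] sup_pow[OF R] ku])
      show "kv * (i0*xP) + ku * (i0*yP) = i0*LP" by (simp add: algebra_simps flip: pP)
      show "kv * (j0*xR) + ku * (j0*yR) = j0*LR" by (simp add: algebra_simps flip: pR)
      show "i0 * xP = i0 * aP \<and> j0 * xR = j0 * aR \<or> i0 * xP = i0 * bP \<and> j0 * xR = j0 * bR" using ends by auto
    qed
    then show ?thesis by simp
  qed
  also have "\<dots> = b i0 j0 * P xP yP ^ i0 * R xR yR ^ j0"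
  proof -
    have "spow P i0 (i0*xP) (i0*yP) = P xP yP ^ i0" by (rule pow_end[OF P ku pP]) (use ends in auto)
    moreover have "spow R j0 (j0*xR) (j0*yR) = R xR yR ^ j0" by (rule pow_end[OF R ku pR]) (use ends in auto)
    ultimately show ?thesis by simp
  qed
  finally show ?thesis .
qed


definition aok :: "(nat \<Rightarrow> nat \<Rightarrow> complex) \<Rightarrow> real \<Rightarrow> bool" where
  "aok f r \<longleftrightarrow> (\<lambda>(i,j). norm (f i j) * r ^ (i+j)) summable_on UNIV"

definition nsum :: "(nat \<Rightarrow> nat \<Rightarrow> complex) \<Rightarrow> real \<Rightarrow> real" where
  "nsum f r = infsum (\<lambda>(i,j). norm (f i j) * r ^ (i+j)) UNIV"

definition ev :: "(nat \<Rightarrow> nat \<Rightarrow> complex) \<Rightarrow> complex \<Rightarrow> complex \<Rightarrow> complex" where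
  "ev f z w = infsum (\<lambda>(i,j). f i j * z ^ i * w ^ j) UNIV"

lemma nsum_nonneg: "r \<ge> 0 \<Longrightarrow> nsum f r \<ge> 0"
  unfolding nsum_def by (intro infsum_nonneg) auto

lemma ev_bound_term:
  fixes f :: "nat \<Rightarrow> nat \<Rightarrow> complex"
  assumes "norm z \<le> r" "norm w \<le> r"
  shows "norm (f i j * z ^ i * w ^ j) \<le> norm (f i j) * r ^ (i+j)"
proof -
  have "norm (f i j * z ^ i * w ^ j) = norm (f i j) * (norm z ^ i * norm w ^ j)"
    by (simp add: norm_mult norm_power mult.assoc)
  also have "\<dots> \<le> norm (f i j) * (r ^ i * r ^ j)"
  proof -
    have r: "0 \<le> r" using assms(1) norm_ge_zero order_trans by blast
    show ?thesis using assms r by (intro mult_left_mono mult_mono power_mono) auto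
  qed
  finally show ?thesis by (simp add: power_add)
qed

lemma ev_summable:
  assumes "aok f r" "norm z \<le> r" "norm w \<le> r"
  shows "(\<lambda>(i,j). norm (f i j * z ^ i * w ^ j)) summable_on UNIV"
    and "(\<lambda>(i,j). f i j * z ^ i * w ^ j) summable_on UNIV"
    and "norm (ev f z w) \<le> nsum f r"
proof -
  have a: "(\<lambda>x. norm ((\<lambda>(i,j). f i j * z ^ i * w ^ j) x)) summable_on UNIV"
    by (rule Infinite_Sum.abs_summable_on_comparison_test'[OF assms(1)[unfolded aok_def]])
       (use ev_bound_term[OF assms(2,3)] in auto)
  then show "(\<lambda>(i,j). norm (f i j * z ^ i * w ^ j)) summable_on UNIV"
    by (simp add: case_prod_unfold)
  show s: "(\<lambda>(i,j). f i j * z ^ i * w ^ j) summable_on UNIV"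
    using a by (rule abs_summable_summable)
  show "norm (ev f z w) \<le> nsum f r"
    unfolding ev_def nsum_def
    by (rule norm_infsum_le[OF has_sum_infsum[OF s] has_sum_infsum[OF assms(1)[unfolded aok_def]]])
       (use ev_bound_term[OF assms(2,3)] in auto)
qed

lemma has_sum_ev:
  assumes "aok f r" "norm z \<le> r" "norm w \<le> r"
  shows "((\<lambda>(i,j). f i j * z ^ i * w ^ j) has_sum ev f z w) UNIV"
  unfolding ev_def using ev_summable(2)[OF assms] by simp

lemma regroup:
  fixes F :: "(nat \<times> nat) \<times> (nat \<times> nat) \<Rightarrow> 'a::{topological_comm_monoid_add,t3_space}"
  assumes "(F has_sum S) UNIV"
  shows "((\<lambda>(m,n). \<Sum>i\<le>m. \<Sum>j\<le>n. F ((i,j),(m-i,n-j))) has_sum S) UNIV"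
proof -
  define h :: "(nat \<times> nat) \<times> (nat \<times> nat) \<Rightarrow> (nat \<times> nat) \<times> (nat \<times> nat)"
    where "h = (\<lambda>((m,n),(i,j)). ((i,j),(m-i,n-j)))"
  define h' :: "(nat \<times> nat) \<times> (nat \<times> nat) \<Rightarrow> (nat \<times> nat) \<times> (nat \<times> nat)"
    where "h' = (\<lambda>((i,j),(k,l)). ((i+k,j+l),(i,j)))"
  let ?S = "Sigma UNIV (\<lambda>(m,n). {..m} \<times> {..n})"
  have bij: "bij_betw h ?S UNIV"
    by (rule bij_betw_byWitness[where f'=h']) (auto simp: h_def h'_def)
  have "((\<lambda>x. F (h x)) has_sum S) ?S"
    using has_sum_reindex_bij_betw[OF bij, of F S] assms by simp
  then show ?thesis
  proof (rule has_sum_SigmaD)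
    fix x :: "nat \<times> nat" assume "x \<in> UNIV"
    obtain m n where x: "x = (m,n)" by (cases x)
    have eq: "(\<Sum>y\<in>{..m} \<times> {..n}. F (h (x,y))) = (\<Sum>i\<le>m. \<Sum>j\<le>n. F ((i,j),(m-i,n-j)))"
      unfolding x h_def by (simp add: sum.cartesian_product case_prod_unfold)
    have "((\<lambda>y. F (h (x, y))) has_sum (\<Sum>y\<in>{..m} \<times> {..n}. F (h (x,y)))) ({..m} \<times> {..n})"
      by (rule has_sum_finite) simp
    then have "((\<lambda>y. F (h (x, y))) has_sum (\<Sum>i\<le>m. \<Sum>j\<le>n. F ((i,j),(m-i,n-j)))) ({..m} \<times> {..n})"
      by (simp only: eq)
    then show "((\<lambda>y. F (h (x, y))) has_sum (case x of (m,n) \<Rightarrow> \<Sum>i\<le>m. \<Sum>j\<le>n. F ((i,j),(m-i,n-j)))) (case x of (m,n) \<Rightarrow> {..m} \<times> {..n})"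
      unfolding x by (simp only: prod.case)
  qed
qed

lemma has_sum_product:
  fixes f :: "'b \<Rightarrow> 'a::{real_normed_div_algebra, banach}" and g :: "'c \<Rightarrow> 'a"
  assumes f: "(f has_sum a) A" and g: "(g has_sum b) B"
    and nf: "(\<lambda>x. norm (f x)) summable_on A" and ng: "(\<lambda>y. norm (g y)) summable_on B"
  shows "((\<lambda>(x,y). f x * g y) has_sum a * b) (A \<times> B)"
proof -
  have ns: "(\<lambda>(x,y). norm (f x) * norm (g y)) summable_on Sigma A (\<lambda>_. B)"
  proof (rule summable_on_SigmaI)
    fix x assume "x \<in> A"
    show "((\<lambda>y. case (x, y) of (x, y) \<Rightarrow> norm (f x) * norm (g y)) has_sum norm (f x) * infsum (\<lambda>y. norm (g y)) B) B"
      using has_sum_cmult_right[OF has_sum_infsum[OF ng], of "norm (f x)"] by simp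
  next
    show "(\<lambda>x. norm (f x) * infsum (\<lambda>y. norm (g y)) B) summable_on A"
      using summable_on_cmult_left[OF nf] by simp
  qed auto
  have s: "(\<lambda>(x,y). f x * g y) summable_on Sigma A (\<lambda>_. B)"
  proof (rule abs_summable_summable)
    show "(\<lambda>p. norm (case p of (x, y) \<Rightarrow> f x * g y)) summable_on Sigma A (\<lambda>_. B)"
      using ns by (simp add: case_prod_unfold norm_mult)
  qed
  have "((\<lambda>(x,y). f x * g y) has_sum a * b) (Sigma A (\<lambda>_. B))"
  proof (rule has_sum_SigmaI[where g="\<lambda>x. f x * b"])
    fix x assume "x \<in> A"
    show "((\<lambda>y. case (x, y) of (x, y) \<Rightarrow> f x * g y) has_sum f x * b) B"
      using has_sum_cmult_right[OF g, of "f x"] by simp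
  next
    show "((\<lambda>x. f x * b) has_sum a * b) A" by (rule has_sum_cmult_left[OF f])
  qed (rule s)
  then show ?thesis by simp
qed

lemma smul_bound:
  "norm (smul f g m n) * r ^ (m+n) \<le> (\<Sum>i\<le>m. \<Sum>j\<le>n. (norm (f i j) * r ^ (i+j)) * (norm (g (m-i) (n-j)) * r ^ ((m-i)+(n-j))))"
  if "r \<ge> 0"
proof -
  have "norm (smul f g m n) \<le> (\<Sum>i\<le>m. \<Sum>j\<le>n. norm (f i j) * norm (g (m-i) (n-j)))"
    unfolding smul_def
    by (rule order.trans[OF norm_sum sum_mono], rule order.trans[OF norm_sum sum_mono]) (simp add: norm_mult)
  then have "norm (smul f g m n) * r ^ (m+n) \<le> (\<Sum>i\<le>m. \<Sum>j\<le>n. norm (f i j) * norm (g (m-i) (n-j))) * r ^ (m+n)"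
    using that by (intro mult_right_mono) auto
  also have "\<dots> = (\<Sum>i\<le>m. \<Sum>j\<le>n. (norm (f i j) * r ^ (i+j)) * (norm (g (m-i) (n-j)) * r ^ ((m-i)+(n-j))))"
    unfolding sum_distrib_right
  proof (intro sum.cong refl)
    fix i j assume "i \<in> {..m}" "j \<in> {..n}"
    then have "r ^ (m+n) = r ^ (i+j) * r ^ ((m-i)+(n-j))" by (simp flip: power_add)
    then show "norm (f i j) * norm (g (m-i) (n-j)) * r ^ (m+n) = (norm (f i j) * r ^ (i+j)) * (norm (g (m-i) (n-j)) * r ^ ((m-i)+(n-j)))"
      by (simp add: algebra_simps)
  qed
  finally show ?thesis .
qed

lemma mul_aok:
  assumes f: "aok f r" and g: "aok g r" and r: "r \<ge> 0"
  shows "aok (smul f g) r" "nsum (smul f g) r \<le> nsum f r * nsum g r"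
proof -
  let ?F = "\<lambda>(x,y). (case x of (i,j) \<Rightarrow> norm (f i j) * r ^ (i+j)) * (case y of (k,l) \<Rightarrow> norm (g k l) * r ^ (k+l))"
  have hf: "((\<lambda>(i,j). norm (f i j) * r ^ (i+j)) has_sum nsum f r) UNIV"
    using f unfolding aok_def nsum_def by simp
  have hg: "((\<lambda>(i,j). norm (g i j) * r ^ (i+j)) has_sum nsum g r) UNIV"
    using g unfolding aok_def nsum_def by simp
  have "(?F has_sum nsum f r * nsum g r) (UNIV \<times> UNIV)"
    by (rule has_sum_product[OF hf hg]) (use f g r in \<open>auto simp: aok_def case_prod_unfold\<close>)
  then have "(?F has_sum nsum f r * nsum g r) UNIV" by simp
  from regroup[OF this]
  have G: "((\<lambda>(m,n). \<Sum>i\<le>m. \<Sum>j\<le>n. (norm (f i j) * r ^ (i+j)) * (norm (g (m-i) (n-j)) * r ^ ((m-i)+(n-j)))) has_sum nsum f r * nsum g r) UNIV"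
    by (simp only: prod.case)
  have bnd: "norm ((\<lambda>(m,n). norm (smul f g m n) * r ^ (m+n)) x) \<le> (\<lambda>(m,n). \<Sum>i\<le>m. \<Sum>j\<le>n. (norm (f i j) * r ^ (i+j)) * (norm (g (m-i) (n-j)) * r ^ ((m-i)+(n-j)))) x" for x
    using smul_bound[OF r, of f g] r by (cases x) auto
  have "(\<lambda>x. norm ((\<lambda>(m,n). norm (smul f g m n) * r ^ (m+n)) x)) summable_on UNIV"
    by (rule Infinite_Sum.abs_summable_on_comparison_test'[OF has_sum_imp_summable[OF G]]) (use bnd in auto)
  moreover have "(\<lambda>x. norm ((\<lambda>(m,n). norm (smul f g m n) * r ^ (m+n)) x)) = (\<lambda>(m,n). norm (smul f g m n) * r ^ (m+n))"
    using r by (auto simp: fun_eq_iff)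
  ultimately have S: "(\<lambda>(m,n). norm (smul f g m n) * r ^ (m+n)) summable_on UNIV" by simp
  then show "aok (smul f g) r" unfolding aok_def .
  have "infsum (\<lambda>(m,n). norm (smul f g m n) * r ^ (m+n)) UNIV \<le> nsum f r * nsum g r"
    by (rule has_sum_mono[OF has_sum_infsum[OF S] G]) (use bnd r in \<open>auto simp: case_prod_unfold\<close>)
  then show "nsum (smul f g) r \<le> nsum f r * nsum g r" unfolding nsum_def by simp
qed

lemma mul_ev:
  assumes f: "aok f r" and g: "aok g r" and z: "norm z \<le> r" and w: "norm w \<le> r"
  shows "ev (smul f g) z w = ev f z w * ev g z w"
proof -
  let ?F = "\<lambda>(x,y). (case x of (i,j) \<Rightarrow> f i j * z ^ i * w ^ j) * (case y of (k,l) \<Rightarrow> g k l * z ^ k * w ^ l)"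
  have "(?F has_sum ev f z w * ev g z w) (UNIV \<times> UNIV)"
    by (rule has_sum_product[OF has_sum_ev[OF f z w] has_sum_ev[OF g z w]])
       (use ev_summable(1)[OF f z w] ev_summable(1)[OF g z w] in \<open>auto simp: case_prod_unfold\<close>)
  then have "(?F has_sum ev f z w * ev g z w) UNIV" by simp
  from regroup[OF this]
  have G: "((\<lambda>(m,n). \<Sum>i\<le>m. \<Sum>j\<le>n. (f i j * z ^ i * w ^ j) * (g (m-i) (n-j) * z ^ (m-i) * w ^ (n-j))) has_sum ev f z w * ev g z w) UNIV"
    by (simp only: prod.case)
  have eq: "(\<Sum>i\<le>m. \<Sum>j\<le>n. (f i j * z ^ i * w ^ j) * (g (m-i) (n-j) * z ^ (m-i) * w ^ (n-j))) = smul f g m n * z ^ m * w ^ n" for m n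
    unfolding smul_def sum_distrib_right
  proof (intro sum.cong refl)
    fix i j assume "i \<in> {..m}" "j \<in> {..n}"
    then have "z ^ m = z ^ i * z ^ (m-i)" "w ^ n = w ^ j * w ^ (n-j)" by (simp_all flip: power_add)
    then show "(f i j * z ^ i * w ^ j) * (g (m-i) (n-j) * z ^ (m-i) * w ^ (n-j)) = f i j * g (m-i) (n-j) * z ^ m * w ^ n"
      by (simp add: algebra_simps)
  qed
  have "((\<lambda>(m,n). smul f g m n * z ^ m * w ^ n) has_sum ev f z w * ev g z w) UNIV"
    using G by (simp add: eq)
  then show ?thesis unfolding ev_def by (simp add: infsumI)
qed

lemma sone_props: "r \<ge> 0 \<Longrightarrow> aok sone r" "nsum sone r = 1" "ev sone z w = 1"
proof -
  have s: "(\<lambda>(i,j). norm (sone i j) * r ^ (i+j)) = (\<lambda>x. if x = (0,0) then 1 else 0)"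
    by (auto simp: sone_def fun_eq_iff)
  have h: "((\<lambda>x::nat\<times>nat. if x = (0,0) then 1 else (0::real)) has_sum 1) UNIV"
  proof -
    have "((\<lambda>x::nat\<times>nat. if x = (0,0) then 1 else (0::real)) has_sum 1) {(0,0)}"
      using has_sum_finite[of "{(0::nat,0::nat)}" "\<lambda>x. if x = (0,0) then 1 else (0::real)"] by simp
    then show ?thesis by (rule has_sum_cong_neutral[THEN iffD1, rotated -1]) auto
  qed
  show "r \<ge> 0 \<Longrightarrow> aok sone r" unfolding aok_def s using h by (rule has_sum_imp_summable)
  show "nsum sone r = 1" unfolding nsum_def s using h by (rule infsumI)
  have s2: "(\<lambda>(i,j). sone i j * z ^ i * w ^ j) = (\<lambda>x. if x = (0,0) then 1 else 0)"
    by (auto simp: sone_def fun_eq_iff)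
  have h2: "((\<lambda>x::nat\<times>nat. if x = (0,0) then 1 else (0::complex)) has_sum 1) UNIV"
  proof -
    have "((\<lambda>x::nat\<times>nat. if x = (0,0) then 1 else (0::complex)) has_sum 1) {(0,0)}"
      using has_sum_finite[of "{(0::nat,0::nat)}" "\<lambda>x. if x = (0,0) then 1 else (0::complex)"] by simp
    then show ?thesis by (rule has_sum_cong_neutral[THEN iffD1, rotated -1]) auto
  qed
  show "ev sone z w = 1" unfolding ev_def s2 using h2 by (rule infsumI)
qed

lemma pow_props:
  assumes f: "aok f r" and r: "r \<ge> 0"
  shows "aok (spow f n) r \<and> nsum (spow f n) r \<le> nsum f r ^ n \<and>
         (\<forall>z w. norm z \<le> r \<longrightarrow> norm w \<le> r \<longrightarrow> ev (spow f n) z w = ev f z w ^ n)"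
proof (induction n)
  case 0 then show ?case using sone_props(1)[OF r] sone_props(2) sone_props(3) by simp
next
  case (Suc n)
  then have a: "aok (spow f n) r" and b: "nsum (spow f n) r \<le> nsum f r ^ n"
    and c: "\<forall>z w. norm z \<le> r \<longrightarrow> norm w \<le> r \<longrightarrow> ev (spow f n) z w = ev f z w ^ n" by auto
  have "nsum (smul f (spow f n)) r \<le> nsum f r * nsum (spow f n) r" by (rule mul_aok(2)[OF f a r])
  also have "\<dots> \<le> nsum f r * nsum f r ^ n" using b nsum_nonneg[OF r, of f] by (intro mult_left_mono) auto
  finally show ?case using mul_aok(1)[OF f a r] mul_ev[OF f a] c by simp
qed


lemma aok_mono:
  assumes "aok f r1" "0 \<le> r" "r \<le> r1"
  shows "aok f r" "nsum f r \<le> nsum f r1"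
proof -
  have b: "norm ((\<lambda>(i,j). norm (f i j) * r ^ (i+j)) x) \<le> (\<lambda>(i,j). norm (f i j) * r1 ^ (i+j)) x" for x
    using assms(2,3) by (cases x) (auto intro!: mult_left_mono power_mono)
  have "(\<lambda>x. norm ((\<lambda>(i,j). norm (f i j) * r ^ (i+j)) x)) summable_on UNIV"
    by (rule Infinite_Sum.abs_summable_on_comparison_test'[OF assms(1)[unfolded aok_def]]) (use b in auto)
  moreover have "(\<lambda>x. norm ((\<lambda>(i,j). norm (f i j) * r ^ (i+j)) x)) = (\<lambda>(i,j). norm (f i j) * r ^ (i+j))"
    using assms(2) by (auto simp: fun_eq_iff)
  ultimately have S: "(\<lambda>(i,j). norm (f i j) * r ^ (i+j)) summable_on UNIV" by simp
  then show "aok f r" unfolding aok_def .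
  have b2: "(\<lambda>(i,j). norm (f i j) * r ^ (i+j)) x \<le> (\<lambda>(i,j). norm (f i j) * r1 ^ (i+j)) x" for x
    using assms(2,3) by (cases x) (auto intro!: mult_left_mono power_mono)
  show "nsum f r \<le> nsum f r1" unfolding nsum_def
    by (rule infsum_mono[OF S assms(1)[unfolded aok_def]]) (rule b2)
qed

lemma aok_small:
  assumes f: "aok f r1" and f00: "f 0 0 = 0" and r: "0 \<le> r" "r \<le> r1" and r1: "0 < r1"
  shows "nsum f r \<le> (r / r1) * nsum f r1"
proof -
  have S: "(\<lambda>(i,j). norm (f i j) * r ^ (i+j)) summable_on UNIV"
    using aok_mono(1)[OF f r] unfolding aok_def .
  have H1: "((\<lambda>(i,j). norm (f i j) * r1 ^ (i+j)) has_sum nsum f r1) UNIV"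
    using f unfolding aok_def nsum_def by simp
  have H2: "((\<lambda>x. (r / r1) * (\<lambda>(i,j). norm (f i j) * r1 ^ (i+j)) x) has_sum (r / r1) * nsum f r1) UNIV"
    by (rule has_sum_cmult_right[OF H1])
  have b: "(\<lambda>(i,j). norm (f i j) * r ^ (i+j)) x \<le> (r / r1) * (\<lambda>(i,j). norm (f i j) * r1 ^ (i+j)) x" for x
  proof (cases x)
    case (Pair i j)
    show ?thesis
    proof (cases "i + j = 0")
      case True then show ?thesis using Pair f00 by simp
    next
      case False
      have q: "0 \<le> r / r1" "r / r1 \<le> 1" using r r1 by auto
      have "(r / r1) ^ (i+j) \<le> (r / r1) ^ 1" by (rule power_decreasing) (use False q in auto)
      then have "(r / r1) ^ (i+j) * r1 ^ (i+j) \<le> (r / r1) * r1 ^ (i+j)" using r1 by (intro mult_right_mono) auto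
      moreover have "(r / r1) ^ (i+j) * r1 ^ (i+j) = r ^ (i+j)" using r1 by (simp add: power_divide)
      ultimately have "r ^ (i+j) \<le> (r / r1) * r1 ^ (i+j)" by simp
      then have "norm (f i j) * r ^ (i+j) \<le> norm (f i j) * ((r / r1) * r1 ^ (i+j))" by (intro mult_left_mono) auto
      then show ?thesis using Pair by (simp add: algebra_simps)
    qed
  qed
  have "infsum (\<lambda>(i,j). norm (f i j) * r ^ (i+j)) UNIV \<le> (r / r1) * nsum f r1"
    by (rule has_sum_mono[OF has_sum_infsum[OF S] H2]) (rule b)
  moreover have "nsum f r = infsum (\<lambda>(i,j). norm (f i j) * r ^ (i+j)) UNIV" unfolding nsum_def ..
  ultimately show ?thesis by simp
qed

definition good :: "(nat \<Rightarrow> nat \<Rightarrow> complex) \<Rightarrow> (complex \<Rightarrow> complex \<Rightarrow> complex) \<Rightarrow> bool" where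
  "good c g \<longleftrightarrow> (\<exists>r>0. aok c r \<and> (\<forall>z w. norm z < r \<longrightarrow> norm w < r \<longrightarrow> g z w = ev c z w))"

lemma exp_good:
  assumes "has_expansion2 c g"
  shows "good c g"
proof -
  obtain r where r: "r > 0" and h: "\<And>z w. norm z < r \<Longrightarrow> norm w < r \<Longrightarrow> ((\<lambda>(i,j). c i j * z ^ i * w ^ j) has_sum g z w) UNIV"
    using assms unfolding has_expansion2_def by blast
  define s where "s = r / 2"
  have s: "0 < s" "s < r" using r unfolding s_def by auto
  have "((\<lambda>(i,j). c i j * complex_of_real s ^ i * complex_of_real s ^ j) has_sum g (complex_of_real s) (complex_of_real s)) UNIV"
    by (rule h) (use s in auto)
  then have "(\<lambda>(i,j). c i j * complex_of_real s ^ i * complex_of_real s ^ j) summable_on UNIV"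
    by (rule has_sum_imp_summable)
  then have "(\<lambda>x. norm ((\<lambda>(i,j). c i j * complex_of_real s ^ i * complex_of_real s ^ j) x)) summable_on UNIV"
    by (simp add: summable_on_iff_abs_summable_on_complex)
  moreover have "(\<lambda>x. norm ((\<lambda>(i,j). c i j * complex_of_real s ^ i * complex_of_real s ^ j) x)) = (\<lambda>(i,j). norm (c i j) * s ^ (i+j))"
    using s by (auto simp: fun_eq_iff norm_mult norm_power power_add)
  ultimately have a: "aok c s" unfolding aok_def by simp
  have "g z w = ev c z w" if "norm z < s" "norm w < s" for z w
  proof -
    have "((\<lambda>(i,j). c i j * z ^ i * w ^ j) has_sum g z w) UNIV" by (rule h) (use that s in auto)
    then show ?thesis unfolding ev_def by (simp add: infsumI)
  qed
  then show ?thesis unfolding good_def using a s by blast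
qed

lemma good_exp:
  assumes "good c g"
  shows "has_expansion2 c g"
proof -
  obtain r where r: "r > 0" "aok c r" and e: "\<And>z w. norm z < r \<Longrightarrow> norm w < r \<Longrightarrow> g z w = ev c z w"
    using assms unfolding good_def by blast
  have "((\<lambda>(i,j). c i j * z ^ i * w ^ j) has_sum g z w) UNIV" if "norm z < r" "norm w < r" for z w
    using has_sum_ev[OF r(2), of z w] e[OF that] that by simp
  then show ?thesis unfolding has_expansion2_def using r(1) by blast
qed

lemma good_restrict:
  assumes "good c g"
  shows "\<exists>r>0. aok c r \<and> (\<forall>z w. norm z < r \<longrightarrow> norm w < r \<longrightarrow> g z w = ev c z w) \<and>
     (\<forall>r'. 0 < r' \<and> r' \<le> r \<longrightarrow> aok c r' \<and> (\<forall>z w. norm z < r' \<longrightarrow> norm w < r' \<longrightarrow> g z w = ev c z w))"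
proof -
  obtain r where r: "r > 0" "aok c r" and e: "\<And>z w. norm z < r \<Longrightarrow> norm w < r \<Longrightarrow> g z w = ev c z w"
    using assms unfolding good_def by blast
  show ?thesis using r e aok_mono(1)[OF r(2)] by (intro exI[of _ r]) auto
qed

lemma bij_swap_UNIV: "bij_betw prod.swap (UNIV :: ('a \<times> 'b) set) UNIV"
  by (rule bij_betw_byWitness[where f'=prod.swap]) auto


lemma comp_good:
  assumes gb: "good b q" and gP: "good P Pf" and gR: "good R Rf" and P00: "P 0 0 = 0" and R00: "R 0 0 = 0"
  shows "good (scomp b P R) (\<lambda>z w. q (Pf z w) (Rf z w))"
proof -
  obtain rb where rb: "rb > 0" "aok b rb" and eb: "\<And>X Y. norm X < rb \<Longrightarrow> norm Y < rb \<Longrightarrow> q X Y = ev b X Y"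
    using gb unfolding good_def by blast
  obtain rP where rP: "rP > 0" "aok P rP" and eP: "\<And>z w. norm z < rP \<Longrightarrow> norm w < rP \<Longrightarrow> Pf z w = ev P z w"
    using gP unfolding good_def by blast
  obtain rR where rR: "rR > 0" "aok R rR" and eR: "\<And>z w. norm z < rR \<Longrightarrow> norm w < rR \<Longrightarrow> Rf z w = ev R z w"
    using gR unfolding good_def by blast
  define r1 where "r1 = min rP rR"
  have r1: "0 < r1" "r1 \<le> rP" "r1 \<le> rR" using rP rR unfolding r1_def by auto
  have aP1: "aok P r1" using aok_mono(1)[OF rP(2)] r1 by auto
  have aR1: "aok R r1" using aok_mono(1)[OF rR(2)] r1 by auto
  define s where "s = rb / 2"
  have s: "0 < s" "s < rb" using rb unfolding s_def by auto
  have ab: "aok b s" using aok_mono(1)[OF rb(2)] s by auto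
  define M where "M = nsum P r1 + nsum R r1 + 1"
  have nP1: "nsum P r1 \<ge> 0" and nR1: "nsum R r1 \<ge> 0" using nsum_nonneg r1 by auto
  have M: "M > 0" "nsum P r1 \<le> M" "nsum R r1 \<le> M" using nP1 nR1 unfolding M_def by auto
  define \<rho> where "\<rho> = r1 * min (1/2) (s / M)"
  have q0: "0 < min (1/2) (s / M)" using s M by auto
  have \<rho>: "0 < \<rho>" "\<rho> < r1" "\<rho> \<le> r1" using r1 q0 unfolding \<rho>_def by (auto simp: mult_less_cancel_left1 min_less_iff_disj)
  have rq: "\<rho> / r1 \<le> s / M" using r1 unfolding \<rho>_def by auto
  have aP: "aok P \<rho>" using aok_mono(1)[OF aP1] \<rho> by auto
  have aR: "aok R \<rho>" using aok_mono(1)[OF aR1] \<rho> by auto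
  have NPs: "nsum P \<rho> \<le> s"
  proof -
    have "nsum P \<rho> \<le> (\<rho> / r1) * nsum P r1" by (rule aok_small[OF aP1 P00]) (use \<rho> r1 in auto)
    also have "\<dots> \<le> (s / M) * M" using rq M nP1 \<rho> r1 s by (intro mult_mono) auto
    finally show ?thesis using M by simp
  qed
  have NRs: "nsum R \<rho> \<le> s"
  proof -
    have "nsum R \<rho> \<le> (\<rho> / r1) * nsum R r1" by (rule aok_small[OF aR1 R00]) (use \<rho> r1 in auto)
    also have "\<dots> \<le> (s / M) * M" using rq M nR1 \<rho> r1 s by (intro mult_mono) auto
    finally show ?thesis using M by simp
  qed
  have NP0: "nsum P \<rho> \<ge> 0" and NR0: "nsum R \<rho> \<ge> 0" using nsum_nonneg \<rho> by auto
  define C where "C i j = smul (spow P i) (spow R j)" for i j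
  have ppP: "aok (spow P i) \<rho> \<and> nsum (spow P i) \<rho> \<le> nsum P \<rho> ^ i \<and>
         (\<forall>z w. norm z \<le> \<rho> \<longrightarrow> norm w \<le> \<rho> \<longrightarrow> ev (spow P i) z w = ev P z w ^ i)" for i
    by (rule pow_props[OF aP]) (use \<rho> in auto)
  have ppR: "aok (spow R j) \<rho> \<and> nsum (spow R j) \<rho> \<le> nsum R \<rho> ^ j \<and>
         (\<forall>z w. norm z \<le> \<rho> \<longrightarrow> norm w \<le> \<rho> \<longrightarrow> ev (spow R j) z w = ev R z w ^ j)" for j
    by (rule pow_props[OF aR]) (use \<rho> in auto)
  have aC: "aok (C i j) \<rho>" for i j
    unfolding C_def using mul_aok(1) ppP ppR \<rho> by auto
  have nC: "nsum (C i j) \<rho> \<le> s ^ (i+j)" for i j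
  proof -
    have "nsum (C i j) \<rho> \<le> nsum (spow P i) \<rho> * nsum (spow R j) \<rho>"
      unfolding C_def using mul_aok(2) ppP ppR \<rho> by auto
    also have "\<dots> \<le> nsum P \<rho> ^ i * nsum R \<rho> ^ j"
      using ppP ppR nsum_nonneg \<rho> by (intro mult_mono) auto
    also have "\<dots> \<le> s ^ i * s ^ j"
      using NPs NRs NP0 NR0 by (intro mult_mono power_mono) auto
    finally show ?thesis by (simp add: power_add)
  qed
  have evC: "ev (C i j) z w = ev P z w ^ i * ev R z w ^ j" if "norm z \<le> \<rho>" "norm w \<le> \<rho>" for i j z w
  proof -
    have "ev (C i j) z w = ev (spow P i) z w * ev (spow R j) z w"
      unfolding C_def by (rule mul_ev) (use ppP ppR that in auto)
    then show ?thesis using ppP[of i] ppR[of j] that by simp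
  qed
  define nt where "nt c y = norm (c (fst y) (snd y)) * \<rho> ^ (fst y + snd y)" for c :: "nat \<Rightarrow> nat \<Rightarrow> complex" and y :: "nat \<times> nat"
  define NF where "NF p = norm (b (fst (fst p)) (snd (fst p))) * nt (C (fst (fst p)) (snd (fst p))) (snd p)" for p :: "(nat \<times> nat) \<times> (nat \<times> nat)"
  have nt_case: "nt c = (\<lambda>(k,l). norm (c k l) * \<rho> ^ (k+l))" for c unfolding nt_def by (auto simp: fun_eq_iff)
  have ntC: "(nt (C i j) has_sum nsum (C i j) \<rho>) UNIV" for i j
    using aC[of i j] unfolding aok_def nsum_def nt_case by simp
  have NF0: "NF p \<ge> 0" for p unfolding NF_def nt_def using \<rho> by auto
  have NFs: "NF summable_on UNIV"
  proof -
    have "NF summable_on Sigma UNIV (\<lambda>_. UNIV)"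
    proof (rule summable_on_SigmaI[where g="\<lambda>x. norm (b (fst x) (snd x)) * nsum (C (fst x) (snd x)) \<rho>"])
      fix x :: "nat \<times> nat" assume "x \<in> UNIV"
      show "((\<lambda>y. NF (x, y)) has_sum norm (b (fst x) (snd x)) * nsum (C (fst x) (snd x)) \<rho>) UNIV"
        unfolding NF_def using has_sum_cmult_right[OF ntC[of "fst x" "snd x"], of "norm (b (fst x) (snd x))"] by simp
    next
      have bnd: "norm (norm (b (fst x) (snd x)) * nsum (C (fst x) (snd x)) \<rho>) \<le> (\<lambda>(i,j). norm (b i j) * s ^ (i+j)) x" for x
        using nC[of "fst x" "snd x"] nsum_nonneg[of \<rho> "C (fst x) (snd x)"] \<rho>
        by (cases x) (auto intro!: mult_left_mono)
      have "(\<lambda>x. norm (norm (b (fst x) (snd x)) * nsum (C (fst x) (snd x)) \<rho>)) summable_on UNIV"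
        by (rule Infinite_Sum.abs_summable_on_comparison_test'[OF ab[unfolded aok_def]]) (rule bnd)
      moreover have "(\<lambda>x. norm (norm (b (fst x) (snd x)) * nsum (C (fst x) (snd x)) \<rho>)) = (\<lambda>x. norm (b (fst x) (snd x)) * nsum (C (fst x) (snd x)) \<rho>)"
        using nsum_nonneg \<rho> by (auto simp: fun_eq_iff)
      ultimately show "(\<lambda>x. norm (b (fst x) (snd x)) * nsum (C (fst x) (snd x)) \<rho>) summable_on UNIV" by simp
    qed (rule NF0)
    then show ?thesis by simp
  qed
  have NFsw: "(\<lambda>(y,x). NF (x,y)) summable_on Sigma UNIV (\<lambda>_. UNIV)"
  proof -
    have "(NF \<circ> prod.swap) summable_on UNIV"
      using NFs summable_on_reindex_bij_betw[OF bij_swap_UNIV, of NF] by (simp add: comp_def)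
    then show ?thesis by (simp add: comp_def case_prod_unfold prod.swap_def)
  qed
  have NFfib: "(\<lambda>x. NF (x,y)) summable_on UNIV" for y
    using summable_on_SigmaD1[OF NFsw, of y] by simp
  have Tsum: "(\<lambda>y. infsum (\<lambda>x. NF (x,y)) UNIV) summable_on UNIV"
  proof -
    have "(\<lambda>y. infsum (\<lambda>x. (\<lambda>(y,x). NF (x,y)) (y,x)) UNIV) summable_on UNIV"
      by (rule summable_on_SigmaD[where B="\<lambda>_. UNIV"]) (use NFsw NFfib in auto)
    then show ?thesis by simp
  qed
  define GF where "GF z w p = b (fst (fst p)) (snd (fst p)) * (C (fst (fst p)) (snd (fst p)) (fst (snd p)) (snd (snd p)) * z ^ fst (snd p) * w ^ snd (snd p))"
    for z w :: complex and p :: "(nat \<times> nat) \<times> (nat \<times> nat)"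
  have GFb: "norm (GF z w p) \<le> NF p" if "norm z \<le> \<rho>" "norm w \<le> \<rho>" for z w p
  proof -
    have "norm (C (fst (fst p)) (snd (fst p)) (fst (snd p)) (snd (snd p)) * z ^ fst (snd p) * w ^ snd (snd p)) \<le> nt (C (fst (fst p)) (snd (fst p))) (snd p)"
      unfolding nt_def by (rule ev_bound_term[OF that])
    then show ?thesis unfolding GF_def NF_def by (simp add: norm_mult mult_left_mono)
  qed
  have GFs: "GF z w summable_on UNIV" if "norm z \<le> \<rho>" "norm w \<le> \<rho>" for z w
  proof (rule abs_summable_summable)
    show "(\<lambda>p. norm (GF z w p)) summable_on UNIV"
      by (rule Infinite_Sum.abs_summable_on_comparison_test'[OF NFs]) (rule GFb[OF that])
  qed
  have main: "q (Pf z w) (Rf z w) = ev (scomp b P R) z w" if zw: "norm z < \<rho>" "norm w < \<rho>" for z w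
  proof -
    have zw': "norm z \<le> \<rho>" "norm w \<le> \<rho>" using zw by auto
    let ?S = "infsum (GF z w) UNIV"
    have HS: "(GF z w has_sum ?S) (Sigma UNIV (\<lambda>_. UNIV))" using GFs[OF zw'] by simp
    define X where "X = ev P z w"
    define Y where "Y = ev R z w"
    have PfX: "Pf z w = X" unfolding X_def by (rule eP) (use zw \<rho> r1 in auto)
    have RfY: "Rf z w = Y" unfolding Y_def by (rule eR) (use zw \<rho> r1 in auto)
    have nX: "norm X < rb" using ev_summable(3)[OF aP zw'] NPs s unfolding X_def by linarith
    have nY: "norm Y < rb" using ev_summable(3)[OF aR zw'] NRs s unfolding Y_def by linarith
    \<comment> \<open>(a) summing over the (k,l) first\<close>
    have A: "((\<lambda>x. b (fst x) (snd x) * (X ^ fst x * Y ^ snd x)) has_sum ?S) UNIV"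
    proof (rule has_sum_SigmaD[OF HS])
      fix x :: "nat \<times> nat" assume "x \<in> UNIV"
      have "((\<lambda>y. (\<lambda>(k,l). C (fst x) (snd x) k l * z ^ k * w ^ l) y) has_sum ev (C (fst x) (snd x)) z w) UNIV"
        by (rule has_sum_ev[OF aC zw'])
      then have "((\<lambda>y. b (fst x) (snd x) * (\<lambda>(k,l). C (fst x) (snd x) k l * z ^ k * w ^ l) y) has_sum b (fst x) (snd x) * ev (C (fst x) (snd x)) z w) UNIV"
        by (rule has_sum_cmult_right)
      then show "((\<lambda>y. GF z w (x, y)) has_sum b (fst x) (snd x) * (X ^ fst x * Y ^ snd x)) UNIV"
        unfolding GF_def X_def Y_def evC[OF zw'] by (simp add: case_prod_unfold)
    qed
    have "ev b X Y = ?S"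
    proof -
      have "((\<lambda>(i,j). b i j * X ^ i * Y ^ j) has_sum ?S) UNIV"
        using A by (simp add: case_prod_unfold mult.assoc)
      then show ?thesis unfolding ev_def by (rule infsumI)
    qed
    then have qS: "q (Pf z w) (Rf z w) = ?S" using eb[OF nX nY] PfX RfY by simp
    \<comment> \<open>(b) summing over (i,j) first\<close>
    have HS2: "((\<lambda>(y,x). GF z w (x,y)) has_sum ?S) (Sigma UNIV (\<lambda>_. UNIV))"
    proof -
      have "((GF z w \<circ> prod.swap) has_sum ?S) UNIV"
        using has_sum_reindex_bij_betw[OF bij_swap_UNIV, of "GF z w" ?S] HS by (simp add: comp_def)
      then show ?thesis by (simp add: comp_def case_prod_unfold prod.swap_def)
    qed
    have fibs: "(\<lambda>x. GF z w (x,y)) summable_on UNIV" for y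
      using summable_on_SigmaD1[OF HS2[THEN has_sum_imp_summable], of y] by simp
    have B: "((\<lambda>y. scomp b P R (fst y) (snd y) * z ^ fst y * w ^ snd y) has_sum ?S) UNIV"
    proof (rule has_sum_SigmaD[OF HS2])
      fix y :: "nat \<times> nat" assume "y \<in> UNIV"
      have "infsum (\<lambda>x. GF z w (x,y)) UNIV = infsum (\<lambda>x. b (fst x) (snd x) * C (fst x) (snd x) (fst y) (snd y) * (z ^ fst y * w ^ snd y)) UNIV"
        unfolding GF_def by (simp add: mult.assoc)
      also have "\<dots> = infsum (\<lambda>x. b (fst x) (snd x) * C (fst x) (snd x) (fst y) (snd y)) UNIV * (z ^ fst y * w ^ snd y)"
        by (rule infsum_cmult_left')
      also have "infsum (\<lambda>x. b (fst x) (snd x) * C (fst x) (snd x) (fst y) (snd y)) UNIV = scomp b P R (fst y) (snd y)"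
        unfolding scomp_def C_def by (simp add: case_prod_unfold)
      finally have "infsum (\<lambda>x. GF z w (x,y)) UNIV = scomp b P R (fst y) (snd y) * z ^ fst y * w ^ snd y"
        by (simp add: mult.assoc)
      then show "((\<lambda>x. (\<lambda>(y,x). GF z w (x,y)) (y, x)) has_sum scomp b P R (fst y) (snd y) * z ^ fst y * w ^ snd y) UNIV"
        using has_sum_infsum[OF fibs[of y]] by simp
    qed
    have "ev (scomp b P R) z w = ?S"
    proof -
      have "((\<lambda>(k,l). scomp b P R k l * z ^ k * w ^ l) has_sum ?S) UNIV"
        using B by (simp add: case_prod_unfold)
      then show ?thesis unfolding ev_def by (rule infsumI)
    qed
    then show ?thesis using qS by simp
  qed
  have aS: "aok (scomp b P R) \<rho>"
  proof -
    have bnd: "norm ((\<lambda>(k,l). norm (scomp b P R k l) * \<rho> ^ (k+l)) y) \<le> infsum (\<lambda>x. NF (x,y)) UNIV" for y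
    proof -
      obtain k l where y: "y = (k,l)" by (cases y)
      have "norm (scomp b P R k l) \<le> infsum (\<lambda>x. norm (b (fst x) (snd x) * C (fst x) (snd x) k l)) UNIV"
      proof -
        have "scomp b P R k l = infsum (\<lambda>x. b (fst x) (snd x) * C (fst x) (snd x) k l) UNIV"
          unfolding scomp_def C_def by (simp add: case_prod_unfold)
        moreover have "(\<lambda>x. norm (b (fst x) (snd x) * C (fst x) (snd x) k l)) summable_on UNIV"
        proof -
          have "(\<lambda>x. NF (x,y)) summable_on UNIV" by (rule NFfib)
          then have "(\<lambda>x. NF (x,y) * inverse (\<rho> ^ (k+l))) summable_on UNIV"
            by (rule summable_on_cmult_left)
          moreover have "(\<lambda>x. NF (x,y) * inverse (\<rho> ^ (k+l))) = (\<lambda>x. norm (b (fst x) (snd x) * C (fst x) (snd x) k l))"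
            using \<rho> unfolding NF_def nt_def y by (auto simp: fun_eq_iff norm_mult field_simps)
          ultimately show ?thesis by simp
        qed
        ultimately show ?thesis by (simp add: norm_infsum_bound)
      qed
      then have "norm (scomp b P R k l) * \<rho> ^ (k+l) \<le> infsum (\<lambda>x. norm (b (fst x) (snd x) * C (fst x) (snd x) k l)) UNIV * \<rho> ^ (k+l)"
        using \<rho> by (intro mult_right_mono) auto
      also have "\<dots> = infsum (\<lambda>x. norm (b (fst x) (snd x) * C (fst x) (snd x) k l) * \<rho> ^ (k+l)) UNIV"
        by (rule infsum_cmult_left'[symmetric])
      also have "\<dots> = infsum (\<lambda>x. NF (x,y)) UNIV"
        unfolding NF_def nt_def y by (simp add: norm_mult mult.assoc)
      finally show ?thesis using \<rho> y by simp
    qed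
    have "(\<lambda>y. norm ((\<lambda>(k,l). norm (scomp b P R k l) * \<rho> ^ (k+l)) y)) summable_on UNIV"
      by (rule Infinite_Sum.abs_summable_on_comparison_test'[OF Tsum]) (rule bnd)
    moreover have "(\<lambda>y. norm ((\<lambda>(k,l). norm (scomp b P R k l) * \<rho> ^ (k+l)) y)) = (\<lambda>(k,l). norm (scomp b P R k l) * \<rho> ^ (k+l))"
      using \<rho> by (auto simp: fun_eq_iff)
    ultimately show ?thesis unfolding aok_def by simp
  qed
  show ?thesis unfolding good_def using \<rho>(1) aS main by blast
qed


lemma powser_unique0:
  fixes a :: "nat \<Rightarrow> complex"
  assumes r: "r > 0" and h: "\<And>z. norm z < r \<Longrightarrow> (\<lambda>n. a n * z ^ n) sums 0"
  shows "a n = 0"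
proof (rule ccontr)
  assume an: "a n \<noteq> 0"
  have a0: "a 0 = 0" using h[of 0] r by simp
  then have n0: "n > 0" using an by (cases n) auto
  have sm: "\<And>x. norm (x - 0) < r \<Longrightarrow> (\<lambda>n. a n * (x - 0) ^ n) sums ((\<lambda>_. 0::complex) x)"
    using h by simp
  show False
  proof (rule powser_0_nonzero[OF r sm _ an n0])
    show "(\<lambda>_. 0::complex) 0 = 0" by simp
  next
    fix s :: real assume s: "0 < s" and nz: "\<And>z::complex. z \<in> cball 0 s - {0} \<Longrightarrow> (\<lambda>_. 0::complex) z \<noteq> 0"
    have "complex_of_real s \<in> cball 0 s - {0}" using s by auto
    from nz[OF this] show False by simp
  qed
qed

lemma exp_unique:
  assumes h1: "has_expansion2 c g" and h2: "has_expansion2 c' g"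
  shows "c = c'"
proof -
  obtain r1 where r1: "r1 > 0" "aok c r1" and e1: "\<And>z w. norm z < r1 \<Longrightarrow> norm w < r1 \<Longrightarrow> g z w = ev c z w"
    using exp_good[OF h1] unfolding good_def by blast
  obtain r2 where r2: "r2 > 0" "aok c' r2" and e2: "\<And>z w. norm z < r2 \<Longrightarrow> norm w < r2 \<Longrightarrow> g z w = ev c' z w"
    using exp_good[OF h2] unfolding good_def by blast
  define r where "r = min r1 r2"
  have r: "r > 0" "r \<le> r1" "r \<le> r2" using r1 r2 unfolding r_def by auto
  have a1: "aok c r" using aok_mono(1)[OF r1(2)] r by auto
  have a2: "aok c' r" using aok_mono(1)[OF r2(2)] r by auto
  define e where "e i j = c i j - c' i j" for i j
  have ae: "aok e r"
  proof -
    have S: "(\<lambda>x. (\<lambda>(i,j). norm (c i j) * r ^ (i+j)) x + (\<lambda>(i,j). norm (c' i j) * r ^ (i+j)) x) summable_on UNIV"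
      by (rule summable_on_add) (use a1 a2 in \<open>auto simp: aok_def\<close>)
    have "(\<lambda>x. norm ((\<lambda>(i,j). norm (e i j) * r ^ (i+j)) x)) summable_on UNIV"
    proof (rule Infinite_Sum.abs_summable_on_comparison_test'[OF S])
      fix x :: "nat \<times> nat"
      obtain i j where x: "x = (i,j)" by (cases x)
      have "norm (e i j) \<le> norm (c i j) + norm (c' i j)" unfolding e_def by (rule norm_triangle_ineq4)
      then have "norm (e i j) * r ^ (i+j) \<le> (norm (c i j) + norm (c' i j)) * r ^ (i+j)"
        using r by (intro mult_right_mono) auto
      then show "norm ((\<lambda>(i,j). norm (e i j) * r ^ (i+j)) x) \<le> (\<lambda>(i,j). norm (c i j) * r ^ (i+j)) x + (\<lambda>(i,j). norm (c' i j) * r ^ (i+j)) x"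
        using r x by (simp add: algebra_simps)
    qed
    moreover have "(\<lambda>x. norm ((\<lambda>(i,j). norm (e i j) * r ^ (i+j)) x)) = (\<lambda>(i,j). norm (e i j) * r ^ (i+j))"
      using r by (auto simp: fun_eq_iff)
    ultimately show ?thesis unfolding aok_def by simp
  qed
  have ev0: "((\<lambda>(i,j). e i j * z ^ i * w ^ j) has_sum 0) UNIV" if "norm z < r" "norm w < r" for z w
  proof -
    have "((\<lambda>x. (\<lambda>(i,j). c i j * z ^ i * w ^ j) x - (\<lambda>(i,j). c' i j * z ^ i * w ^ j) x) has_sum (ev c z w - ev c' z w)) UNIV"
    proof -
      have "((\<lambda>x. (\<lambda>(i,j). c i j * z ^ i * w ^ j) x + - (\<lambda>(i,j). c' i j * z ^ i * w ^ j) x) has_sum (ev c z w + - ev c' z w)) UNIV"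
        by (rule has_sum_add[OF has_sum_ev[OF a1] has_sum_uminusI[OF has_sum_ev[OF a2]]]) (use that in auto)
      then show ?thesis by simp
    qed
    moreover have "ev c z w - ev c' z w = 0" using e1[of z w] e2[of z w] that r by simp
    ultimately show ?thesis unfolding e_def by (simp add: case_prod_unfold algebra_simps)
  qed
  have rowS: "(\<lambda>j. norm (e i j) * r ^ j) summable_on UNIV" for i
  proof -
    have "(\<lambda>(i,j). norm (e i j) * r ^ (i+j)) summable_on Sigma UNIV (\<lambda>_. UNIV)" using ae unfolding aok_def by simp
    from summable_on_SigmaD1[OF this] have "(\<lambda>j. norm (e i j) * r ^ (i+j)) summable_on UNIV" by simp
    then have "(\<lambda>j. norm (e i j) * r ^ (i+j) * inverse (r ^ i)) summable_on UNIV" by (rule summable_on_cmult_left)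
    moreover have "(\<lambda>j. norm (e i j) * r ^ (i+j) * inverse (r ^ i)) = (\<lambda>j. norm (e i j) * r ^ j)"
      using r by (auto simp: fun_eq_iff power_add field_simps)
    ultimately show ?thesis by simp
  qed
  have rowS2: "(\<lambda>j. e i j * w ^ j) summable_on UNIV" if "norm w < r" for i w
  proof (rule abs_summable_summable)
    show "(\<lambda>j. norm (e i j * w ^ j)) summable_on UNIV"
    proof (rule Infinite_Sum.abs_summable_on_comparison_test'[OF rowS[of i]])
      fix j
      have "norm (e i j * w ^ j) = norm (e i j) * norm w ^ j" by (simp add: norm_mult norm_power)
      also have "\<dots> \<le> norm (e i j) * r ^ j" using that by (intro mult_left_mono power_mono) auto
      finally show "norm (e i j * w ^ j) \<le> norm (e i j) * r ^ j" .
    qed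
  qed
  define h where "h i w = infsum (\<lambda>j. e i j * w ^ j) UNIV" for i w
  have h0: "h i w = 0" if w: "norm w < r" for i w
  proof (rule powser_unique0[OF r(1), of "\<lambda>i. h i w"])
    fix z :: complex assume z: "norm z < r"
    have "((\<lambda>i. h i w * z ^ i) has_sum 0) UNIV"
    proof (rule has_sum_SigmaD[where B="\<lambda>_. UNIV"])
      show "((\<lambda>(i,j). e i j * z ^ i * w ^ j) has_sum 0) (Sigma UNIV (\<lambda>_. UNIV))" using ev0[OF z w] by simp
    next
      fix i :: nat assume "i \<in> UNIV"
      have "((\<lambda>j. e i j * w ^ j) has_sum h i w) UNIV" unfolding h_def using rowS2[OF w] by simp
      then have "((\<lambda>j. e i j * w ^ j * z ^ i) has_sum h i w * z ^ i) UNIV" by (rule has_sum_cmult_left)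
      then show "((\<lambda>j. (\<lambda>(i,j). e i j * z ^ i * w ^ j) (i, j)) has_sum h i w * z ^ i) UNIV"
        by (simp add: algebra_simps)
    qed
    then show "(\<lambda>i. h i w * z ^ i) sums 0" by (rule has_sum_imp_sums)
  qed
  have "e i j = 0" for i j
  proof (rule powser_unique0[OF r(1), of "\<lambda>j. e i j"])
    fix w :: complex assume w: "norm w < r"
    have "((\<lambda>j. e i j * w ^ j) has_sum 0) UNIV" using h0[OF w, of i] rowS2[OF w, of i] unfolding h_def
      by (metis has_sum_infsum)
    then show "(\<lambda>j. e i j * w ^ j) sums 0" by (rule has_sum_imp_sums)
  qed
  then show ?thesis unfolding e_def by (auto simp: fun_eq_iff)
qed

lemma germ_coeffs_eq:
  assumes "has_expansion2 c g"
  shows "germ_coeffs g = c"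
proof -
  have "has_expansion2 (germ_coeffs g) g" unfolding germ_coeffs_def by (rule someI[of "\<lambda>c. has_expansion2 c g" c]) (rule assms)
  then show ?thesis using exp_unique assms by blast
qed


lemma scomp00:
  assumes "P 0 0 = 0" "R 0 0 = 0"
  shows "scomp b P R 0 0 = b 0 0"
proof -
  have sp: "spow f n 0 0 = f 0 0 ^ n" for f n by (induction n) (auto simp: smul_def sone_def)
  have "scomp b P R 0 0 = (case (0::nat,0::nat) of (i,j) \<Rightarrow> b i j * smul (spow P i) (spow R j) 0 0)"
    unfolding scomp_def
  proof (rule infsum_single_pt)
    fix x :: "nat \<times> nat" assume "x \<noteq> (0,0)"
    then show "(case x of (i,j) \<Rightarrow> b i j * smul (spow P i) (spow R j) 0 0) = 0"
      using assms by (cases x) (auto simp: smul_def sp)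
  qed
  then show ?thesis by (simp add: smul_def sone_def)
qed

lemma good_p2:
  assumes "has_expansion1 a p"
  shows "good (\<lambda>i j. if j = 0 then a i else 0) (\<lambda>x y. p x)"
proof (rule exp_good)
  obtain r where r: "r > 0" and h: "\<And>z. norm z < r \<Longrightarrow> ((\<lambda>k. a k * z ^ k) has_sum p z) UNIV"
    using assms unfolding has_expansion1_def by blast
  have "((\<lambda>(i,j). (if j = 0 then a i else 0) * x ^ i * y ^ j) has_sum p x) UNIV" if "norm x < r" for x y
  proof -
    have inj: "inj_on (\<lambda>k::nat. (k, 0::nat)) UNIV" by (auto simp: inj_on_def)
    have "(((\<lambda>(i,j). (if j = 0 then a i else 0) * x ^ i * y ^ j) \<circ> (\<lambda>k. (k, 0::nat))) has_sum p x) UNIV"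
      using h[OF that] by (simp add: comp_def)
    then have "((\<lambda>(i,j). (if j = 0 then a i else 0) * x ^ i * y ^ j) has_sum p x) (range (\<lambda>k. (k, 0::nat)))"
      using has_sum_reindex[OF inj] by blast
    then show ?thesis
      by (rule has_sum_cong_neutral[THEN iffD1, rotated -1]) (auto simp: image_iff)
  qed
  then show "has_expansion2 (\<lambda>i j. if j = 0 then a i else 0) (\<lambda>x y. p x)"
    unfolding has_expansion2_def using r by blast
qed

lemma good_single:
  assumes "\<And>z w. g z w = z ^ i0 * w ^ j0"
  shows "good (\<lambda>i j. if i = i0 \<and> j = j0 then 1 else 0) g"
proof (rule exp_good)
  have "((\<lambda>(i,j). (if i = i0 \<and> j = j0 then 1 else 0) * z ^ i * w ^ j) has_sum g z w) UNIV" for z w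
  proof -
    have "((\<lambda>(i,j). (if i = i0 \<and> j = j0 then 1 else 0) * z ^ i * w ^ j) has_sum g z w) {(i0,j0)}"
      using has_sum_finite[of "{(i0,j0)}" "\<lambda>(i,j). (if i = i0 \<and> j = j0 then 1 else 0) * z ^ i * w ^ j"] assms
      by simp
    then show ?thesis by (rule has_sum_cong_neutral[THEN iffD1, rotated -1]) (auto split: if_splits)
  qed
  then show "has_expansion2 (\<lambda>i j. if i = i0 \<and> j = j0 then 1 else 0) g"
    unfolding has_expansion2_def by (intro exI[of _ 1]) auto
qed


definition a2 :: "(nat \<Rightarrow> complex) \<Rightarrow> nat \<Rightarrow> nat \<Rightarrow> complex" where
  "a2 a = (\<lambda>i j. if j = 0 then a i else 0)"

definition xs :: "nat \<Rightarrow> nat \<Rightarrow> complex" where "xs = (\<lambda>i j. if i = 1 \<and> j = 0 then 1 else 0)"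
definition ys :: "nat \<Rightarrow> nat \<Rightarrow> complex" where "ys = (\<lambda>i j. if i = 0 \<and> j = 1 then 1 else 0)"

primrec pcs :: "(nat \<Rightarrow> complex) \<Rightarrow> nat \<Rightarrow> nat \<Rightarrow> nat \<Rightarrow> complex" where
  "pcs a 0 = xs"
| "pcs a (Suc n) = scomp (a2 a) (pcs a n) (pcs a n)"

primrec qcs :: "(nat \<Rightarrow> complex) \<Rightarrow> (nat \<Rightarrow> nat \<Rightarrow> complex) \<Rightarrow> nat \<Rightarrow> nat \<Rightarrow> nat \<Rightarrow> complex" where
  "qcs a b 0 = ys"
| "qcs a b (Suc n) = scomp b (pcs a n) (qcs a b n)"

lemma pcs_good:
  assumes pe: "has_expansion1 a p" and a0: "a 0 = 0"
  shows "good (pcs a n) (\<lambda>z w. (p ^^ n) z) \<and> pcs a n 0 0 = 0"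
proof (induction n)
  case 0
  have "good xs (\<lambda>z w. (p ^^ 0) z)" unfolding xs_def by (rule good_single) simp
  then show ?case by (simp add: xs_def)
next
  case (Suc n)
  have g: "good (scomp (a2 a) (pcs a n) (pcs a n)) (\<lambda>z w. (\<lambda>x y. p x) ((p ^^ n) z) ((p ^^ n) z))"
    by (rule comp_good[OF good_p2[OF pe, folded a2_def]]) (use Suc in auto)
  have e: "(\<lambda>z w. (\<lambda>x y. p x) ((p ^^ n) z) ((p ^^ n) z)) = (\<lambda>z w. (p ^^ Suc n) z)" by auto
  have "scomp (a2 a) (pcs a n) (pcs a n) 0 0 = a2 a 0 0" by (rule scomp00) (use Suc in auto)
  then show ?case using g e a0 by (simp add: a2_def)
qed

lemma qcs_good:
  assumes pe: "has_expansion1 a p" and a0: "a 0 = 0" and qe: "has_expansion2 b q" and b0: "b 0 0 = 0"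
  shows "good (qcs a b n) (skewQ p q n) \<and> qcs a b n 0 0 = 0"
proof (induction n)
  case 0
  have "good ys (\<lambda>z w. w)" unfolding ys_def by (rule good_single) simp
  moreover have "skewQ p q 0 = (\<lambda>z w. w)" by (auto simp: fun_eq_iff)
  ultimately show ?case by (simp add: ys_def)
next
  case (Suc n)
  have g: "good (scomp b (pcs a n) (qcs a b n)) (\<lambda>z w. q ((p ^^ n) z) (skewQ p q n z w))"
    by (rule comp_good[OF exp_good[OF qe]]) (use Suc pcs_good[OF pe a0, of n] in auto)
  have e: "(\<lambda>z w. q ((p ^^ n) z) (skewQ p q n z w)) = skewQ p q (Suc n)" by (auto simp: fun_eq_iff)
  have "scomp b (pcs a n) (qcs a b n) 0 0 = b 0 0" by (rule scomp00) (use Suc pcs_good[OF pe a0, of n] in auto)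
  then show ?case using g e b0 by simp
qed

lemma pcs_sup:
  assumes d1: "\<delta> \<ge> 1" and ad: "a \<delta> \<noteq> 0" and alow: "\<forall>k<\<delta>. a k = 0" and kv: "kv > 0" and ku: "ku > 0"
  shows "sup_ok kv ku (pcs a n) (kv * \<delta> ^ n) (\<delta> ^ n) (\<delta> ^ n) \<and> pcs a n (\<delta> ^ n) 0 \<noteq> 0"
proof (induction n)
  case 0
  have "sup_ok kv ku xs kv 1 1" unfolding sup_ok_def xs_def by auto
  then show ?case by (simp add: xs_def)
next
  case (Suc n)
  let ?D = "\<delta> ^ n"
  have S: "sup_ok kv ku (pcs a n) (kv * ?D) ?D ?D" and nz: "pcs a n ?D 0 \<noteq> 0" using Suc by auto
  have Dpos: "?D > 0" using d1 by simp
  have cond: "kv * \<delta> ^ Suc n \<le> i * (kv * ?D) + j * (kv * ?D) \<and>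
      (i * (kv * ?D) + j * (kv * ?D) = kv * \<delta> ^ Suc n \<longrightarrow> \<delta> ^ Suc n \<le> i * ?D + j * ?D \<and> i * ?D + j * ?D \<le> \<delta> ^ Suc n)"
    if "a2 a i j \<noteq> 0" for i j
  proof -
    have j0: "j = 0" and ai: "a i \<noteq> 0" using that by (auto simp: a2_def split: if_splits)
    have id: "\<delta> \<le> i" using ai alow by (meson not_le)
    have "kv * \<delta> ^ Suc n = \<delta> * (kv * ?D)" by simp
    also have "\<dots> \<le> i * (kv * ?D)" using id by (rule mult_right_mono) simp
    finally have le: "kv * \<delta> ^ Suc n \<le> i * (kv * ?D)" .
    have "i = \<delta>" if eq: "i * (kv * ?D) = kv * \<delta> ^ Suc n"
    proof -
      have e2: "kv * \<delta> ^ Suc n = \<delta> * (kv * ?D)" by simp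
      have "i * (kv * ?D) = \<delta> * (kv * ?D)" using eq e2 by linarith
      then show ?thesis using kv Dpos by auto
    qed
    then show ?thesis using le j0 by auto
  qed
  have only: "i = \<delta> \<and> j = 0" if "a2 a i j \<noteq> 0" "i * (kv * ?D) + j * (kv * ?D) = kv * \<delta> ^ Suc n" for i j
  proof -
    have j0: "j = 0" using that(1) by (auto simp: a2_def split: if_splits)
    then have eq: "i * (kv * ?D) = kv * \<delta> ^ Suc n" using that(2) by simp
    have e2: "kv * \<delta> ^ Suc n = \<delta> * (kv * ?D)" by simp
    have "i * (kv * ?D) = \<delta> * (kv * ?D)" using eq e2 by linarith
    then show ?thesis using kv Dpos j0 by auto
  qed
  have sup: "sup_ok kv ku (scomp (a2 a) (pcs a n) (pcs a n)) (kv * \<delta> ^ Suc n) (\<delta> ^ Suc n) (\<delta> ^ Suc n)"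
    by (rule sup_comp[OF S S]) (rule cond)
  have val: "scomp (a2 a) (pcs a n) (pcs a n) (\<delta> * ?D + 0 * ?D) (\<delta> * 0 + 0 * 0) = a2 a \<delta> 0 * pcs a n ?D 0 ^ \<delta> * pcs a n ?D 0 ^ 0"
  proof (rule comp_end[OF S S ku])
    show "kv * ?D + ku * 0 = kv * ?D" by simp
    show "kv * ?D + ku * 0 = kv * ?D" by simp
    show "?D = ?D \<and> ?D = ?D \<and> (\<forall>i j. a2 a i j \<noteq> 0 \<longrightarrow> i * (kv * ?D) + j * (kv * ?D) = kv * \<delta> ^ Suc n \<longrightarrow> (i, j) \<noteq> (\<delta>, 0) \<longrightarrow> \<delta> * ?D + 0 * ?D < i * ?D + j * ?D)
      \<or> ?D = ?D \<and> ?D = ?D \<and> (\<forall>i j. a2 a i j \<noteq> 0 \<longrightarrow> i * (kv * ?D) + j * (kv * ?D) = kv * \<delta> ^ Suc n \<longrightarrow> (i, j) \<noteq> (\<delta>, 0) \<longrightarrow> i * ?D + j * ?D < \<delta> * ?D + 0 * ?D)"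
    proof (intro disjI1 conjI refl allI impI)
      fix i j assume "a2 a i j \<noteq> 0" "i * (kv * ?D) + j * (kv * ?D) = kv * \<delta> ^ Suc n" "(i, j) \<noteq> (\<delta>, 0)"
      then show "\<delta> * ?D + 0 * ?D < i * ?D + j * ?D" using only by blast
    qed
    show "\<And>i j. a2 a i j \<noteq> 0 \<Longrightarrow> kv * \<delta> ^ Suc n \<le> i * (kv * ?D) + j * (kv * ?D)" using cond by blast
    show "\<delta> * (kv * ?D) + 0 * (kv * ?D) = kv * \<delta> ^ Suc n" by simp
  qed
  have "scomp (a2 a) (pcs a n) (pcs a n) (\<delta> ^ Suc n) 0 \<noteq> 0"
    using val nz ad by (simp add: a2_def)
  then show ?case using sup by simp
qed


lemma arith_case1a:
  fixes kv ku i j g dd D Kn :: nat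
  assumes h: "kv * g + ku * dd \<le> kv * i + ku * j" and jd: "dd \<le> j" and Kn: "ku * D < Kn"
  shows "kv * g * D + dd * Kn \<le> i * (kv * D) + j * Kn \<and> (i * (kv * D) + j * Kn = kv * g * D + dd * Kn \<longrightarrow> kv * g * D = kv * i * D \<and> j = dd)"
proof -
  obtain t where j: "j = dd + t" using jd le_Suc_ex by blast
  have h1: "kv * g \<le> kv * i + ku * t" using h unfolding j by (simp add: algebra_simps)
  have h2: "kv * g * D \<le> kv * i * D + ku * t * D" using mult_right_mono[OF h1, of D] by (simp add: algebra_simps)
  have h3: "ku * t * D \<le> t * Kn" using Kn by (simp add: mult.commute mult.left_commute)
  have h4: "t > 0 \<Longrightarrow> ku * t * D < t * Kn" using Kn by (simp add: mult.commute mult.left_commute)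
  have e: "i * (kv * D) + j * Kn = kv * i * D + t * Kn + dd * Kn" unfolding j by (simp add: algebra_simps)
  show ?thesis
  proof (intro conjI impI)
    show "kv * g * D + dd * Kn \<le> i * (kv * D) + j * Kn" using h2 h3 e by linarith
    assume eq: "i * (kv * D) + j * Kn = kv * g * D + dd * Kn"
    have t0: "t = 0"
    proof (rule ccontr)
      assume "t \<noteq> 0" then have "ku * t * D < t * Kn" using h4 by simp
      then show False using h2 e eq by linarith
    qed
    have "t * Kn = 0" using t0 by simp
    then show "kv * g * D = kv * i * D" using eq e by linarith
    show "j = dd" using t0 j by simp
  qed
qed

lemma arith_line_hi:
  fixes kv ku i j g dd D G E :: nat
  assumes h1: "kv * i + ku * j = kv * g + ku * dd" and h2: "kv * G + ku * E = ku * D" and ig: "i \<le> g"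
  shows "ku * (i * D + j * G) + (g - i) * (ku * E) = ku * (g * D + dd * G)"
proof -
  obtain t where g: "g = i + t" using ig le_Suc_ex by blast
  have a: "ku * j = kv * t + ku * dd" using h1 unfolding g by (simp add: algebra_simps)
  have b: "ku * j * G = kv * t * G + ku * dd * G" using arg_cong[OF a, of "\<lambda>x. x * G"] by (simp add: algebra_simps)
  have c: "t * (kv * G) + t * (ku * E) = t * (ku * D)" using arg_cong[OF h2, of "\<lambda>x. t * x"] by (simp add: algebra_simps)
  show ?thesis unfolding g using b c by (simp add: algebra_simps)
qed

lemma arith_line_lo:
  fixes kv ku i j a0 b0 D X F :: nat
  assumes h1: "kv * i + ku * j = kv * a0 + ku * b0" and h2: "kv * X + ku * F = ku * D" and ai: "a0 \<le> i"
  shows "ku * (i * D + j * X) = ku * (a0 * D + b0 * X) + (i - a0) * (ku * F)"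
proof -
  obtain s where i: "i = a0 + s" using ai le_Suc_ex by blast
  have a: "kv * s + ku * j = ku * b0" using h1 unfolding i by (simp add: algebra_simps)
  have b: "kv * s * X + ku * j * X = ku * b0 * X" using arg_cong[OF a, of "\<lambda>x. x * X"] by (simp add: algebra_simps)
  have c: "s * (kv * X) + s * (ku * F) = s * (ku * D)" using arg_cong[OF h2, of "\<lambda>x. s * x"] by (simp add: algebra_simps)
  show ?thesis unfolding i using b c by (simp add: algebra_simps)
qed


primrec Gf :: "nat \<Rightarrow> nat \<Rightarrow> nat \<Rightarrow> nat \<Rightarrow> nat" where
  "Gf g e d 0 = g"
| "Gf g e d (Suc m) = g * e ^ Suc m + d * Gf g e d m"

primrec Af :: "nat \<Rightarrow> nat \<Rightarrow> nat \<Rightarrow> nat \<Rightarrow> nat \<Rightarrow> nat" where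
  "Af A g e d 0 = A"
| "Af A g e d (Suc m) = g * e ^ Suc m + d * Af A g e d m"

primrec Sf :: "nat \<Rightarrow> nat \<Rightarrow> nat \<Rightarrow> nat" where
  "Sf e B 0 = 1"
| "Sf e B (Suc m) = e ^ Suc m + B * Sf e B m"

lemma case1_induct:
  fixes Pc Q :: "nat \<Rightarrow> nat \<Rightarrow> nat \<Rightarrow> complex" and b :: "nat \<Rightarrow> nat \<Rightarrow> complex"
  assumes ku: "ku > 0" and kv: "kv > 0" and g: "g = A + ku" and Bd: "B = d + kv" and dpos: "d > 0"
    and e1: "e \<ge> 1"
    and bsup: "sup_ok kv ku b (kv * A + ku * B) A g" and bAB: "b A B \<noteq> 0" and bgd: "b g d \<noteq> 0"
    and ylow: "\<And>k l. b k l \<noteq> 0 \<Longrightarrow> d \<le> l"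
    and Psup: "\<And>n. sup_ok kv ku (Pc n) (kv * e ^ n) (e ^ n) (e ^ n) \<and> Pc n (e ^ n) 0 \<noteq> 0"
    and Q1: "Q (Suc 0) = b" and Qs: "\<And>m. Q (Suc (Suc m)) = scomp b (Pc (Suc m)) (Q (Suc m))"
    and c1: "ku * e < kv * A + ku * B"
  shows "sup_ok kv ku (Q (Suc m)) (kv * Gf g e d m + ku * d ^ Suc m) (Af A g e d m) (Gf g e d m)
    \<and> Q (Suc m) (Af A g e d m) (B * d ^ m) \<noteq> 0 \<and> Q (Suc m) (Gf g e d m) (d ^ Suc m) \<noteq> 0
    \<and> ku * e ^ Suc m < kv * Gf g e d m + ku * d ^ Suc m
    \<and> Gf g e d m = Af A g e d m + ku * d ^ m
    \<and> kv * Af A g e d m + ku * (B * d ^ m) = kv * Gf g e d m + ku * d ^ Suc m"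
proof (induction m)
  case 0
  have KK: "kv * g + ku * d = kv * A + ku * B" unfolding g Bd by (simp add: algebra_simps)
  show ?case using bsup bAB bgd c1 KK Q1 by (simp add: g)
next
  case (Suc m)
  define G where "G = Gf g e d m"
  define Al where "Al = Af A g e d m"
  define Kn where "Kn = kv * G + ku * d ^ Suc m"
  define D where "D = e ^ Suc m"
  have Dpos: "D > 0" using e1 unfolding D_def by simp
  have RS: "sup_ok kv ku (Q (Suc m)) Kn Al G" and Rlo: "Q (Suc m) Al (B * d ^ m) \<noteq> 0"
    and Rhi: "Q (Suc m) G (d ^ Suc m) \<noteq> 0" and KnD: "ku * D < Kn" and GA: "G = Al + ku * d ^ m"
    and linR: "kv * Al + ku * (B * d ^ m) = Kn"
    using Suc unfolding G_def Al_def Kn_def D_def by auto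
  have PS: "sup_ok kv ku (Pc (Suc m)) (kv * D) D D" and Pnz: "Pc (Suc m) D 0 \<noteq> 0"
    using Psup[of "Suc m"] unfolding D_def by auto
  have KK: "kv * g + ku * d = kv * A + ku * B" unfolding g Bd by (simp add: algebra_simps)
  have Gs: "Gf g e d (Suc m) = g * D + d * G" unfolding G_def D_def by simp
  have As: "Af A g e d (Suc m) = g * D + d * Al" unfolding Al_def D_def by simp
  have Kn': "kv * Gf g e d (Suc m) + ku * d ^ Suc (Suc m) = g * (kv * D) + d * Kn"
    unfolding Gs Kn_def by (simp add: algebra_simps)
  have lev: "g * (kv * D) + d * Kn \<le> i * (kv * D) + j * Kn \<and>
      (i * (kv * D) + j * Kn = g * (kv * D) + d * Kn \<longrightarrow> i = g \<and> j = d)" if bij: "b i j \<noteq> 0" for i j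
  proof -
    have h: "kv * g + ku * d \<le> kv * i + ku * j" using bsup bij KK unfolding sup_ok_def by auto
    have A1: "kv * g * D + d * Kn \<le> i * (kv * D) + j * Kn \<and> (i * (kv * D) + j * Kn = kv * g * D + d * Kn \<longrightarrow> kv * g * D = kv * i * D \<and> j = d)"
      by (rule arith_case1a[OF h ylow[OF bij] KnD])
    have "kv * g * D = kv * i * D \<Longrightarrow> i = g" using kv Dpos by simp
    then show ?thesis using A1 by (auto simp: algebra_simps)
  qed
  have cond: "g * (kv * D) + d * Kn \<le> i * (kv * D) + j * Kn \<and>
      (i * (kv * D) + j * Kn = g * (kv * D) + d * Kn \<longrightarrow> g * D + d * Al \<le> i * D + j * Al \<and> i * D + j * G \<le> g * D + d * G)"
    if "b i j \<noteq> 0" for i j using lev[OF that] by auto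
  have sup: "sup_ok kv ku (scomp b (Pc (Suc m)) (Q (Suc m))) (g * (kv * D) + d * Kn) (g * D + d * Al) (g * D + d * G)"
    by (rule sup_comp[OF PS RS]) (rule cond)
  have lo: "scomp b (Pc (Suc m)) (Q (Suc m)) (g * D + d * Al) (g * 0 + d * (B * d ^ m)) = b g d * Pc (Suc m) D 0 ^ g * Q (Suc m) Al (B * d ^ m) ^ d"
  proof (rule comp_end[OF PS RS ku])
    show "kv * D + ku * 0 = kv * D" by simp
    show "kv * Al + ku * (B * d ^ m) = Kn" by (rule linR)
    show "D = D \<and> Al = Al \<and> (\<forall>i j. b i j \<noteq> 0 \<longrightarrow> i * (kv * D) + j * Kn = g * (kv * D) + d * Kn \<longrightarrow> (i, j) \<noteq> (g, d) \<longrightarrow> g * D + d * Al < i * D + j * Al)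
      \<or> D = D \<and> Al = G \<and> (\<forall>i j. b i j \<noteq> 0 \<longrightarrow> i * (kv * D) + j * Kn = g * (kv * D) + d * Kn \<longrightarrow> (i, j) \<noteq> (g, d) \<longrightarrow> i * D + j * G < g * D + d * G)"
      using lev by blast
    show "\<And>i j. b i j \<noteq> 0 \<Longrightarrow> g * (kv * D) + d * Kn \<le> i * (kv * D) + j * Kn" using lev by blast
  qed simp
  have hi: "scomp b (Pc (Suc m)) (Q (Suc m)) (g * D + d * G) (g * 0 + d * d ^ Suc m) = b g d * Pc (Suc m) D 0 ^ g * Q (Suc m) G (d ^ Suc m) ^ d"
  proof (rule comp_end[OF PS RS ku])
    show "kv * D + ku * 0 = kv * D" by simp
    show "kv * G + ku * d ^ Suc m = Kn" unfolding Kn_def ..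
    show "D = D \<and> G = Al \<and> (\<forall>i j. b i j \<noteq> 0 \<longrightarrow> i * (kv * D) + j * Kn = g * (kv * D) + d * Kn \<longrightarrow> (i, j) \<noteq> (g, d) \<longrightarrow> g * D + d * Al < i * D + j * Al)
      \<or> D = D \<and> G = G \<and> (\<forall>i j. b i j \<noteq> 0 \<longrightarrow> i * (kv * D) + j * Kn = g * (kv * D) + d * Kn \<longrightarrow> (i, j) \<noteq> (g, d) \<longrightarrow> i * D + j * G < g * D + d * G)"
      using lev by blast
    show "\<And>i j. b i j \<noteq> 0 \<Longrightarrow> g * (kv * D) + d * Kn \<le> i * (kv * D) + j * Kn" using lev by blast
  qed simp
  have QS: "Q (Suc (Suc m)) = scomp b (Pc (Suc m)) (Q (Suc m))" by (rule Qs)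
  have nz1: "Q (Suc (Suc m)) (Af A g e d (Suc m)) (B * d ^ Suc m) \<noteq> 0"
    using lo Pnz Rlo bgd unfolding QS As by (simp add: mult.left_commute)
  have nz2: "Q (Suc (Suc m)) (Gf g e d (Suc m)) (d ^ Suc (Suc m)) \<noteq> 0"
    using hi Pnz Rhi bgd unfolding QS Gs by simp
  have ineq: "ku * e ^ Suc (Suc m) < g * (kv * D) + d * Kn"
  proof -
    have "ku * e * D < (kv * A + ku * B) * D" using c1 Dpos by simp
    also have "\<dots> = kv * g * D + ku * d * D" unfolding KK[symmetric] by (simp add: algebra_simps)
    also have "\<dots> \<le> kv * g * D + d * Kn" using KnD by (simp add: mult.commute mult.left_commute)
    finally show ?thesis unfolding D_def by (simp add: algebra_simps)
  qed
  have GA': "Gf g e d (Suc m) = Af A g e d (Suc m) + ku * d ^ Suc m" unfolding Gs As GA by (simp add: algebra_simps)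
  have lin': "kv * Af A g e d (Suc m) + ku * (B * d ^ Suc m) = kv * Gf g e d (Suc m) + ku * d ^ Suc (Suc m)"
    unfolding GA' Bd by (simp add: algebra_simps)
  show ?case using sup nz1 nz2 ineq GA' lin' unfolding QS Kn'[symmetric] Gs[symmetric] As[symmetric] by simp
qed


lemma case2_induct:
  fixes Pc Q :: "nat \<Rightarrow> nat \<Rightarrow> nat \<Rightarrow> complex" and b :: "nat \<Rightarrow> nat \<Rightarrow> complex"
  assumes ku: "ku > 0" and kv: "kv > 0" and g: "g = A + ku" and Bd: "B = d + kv" and dpos: "d > 0"
    and e1: "e \<ge> 1"
    and bsup: "sup_ok kv ku b (kv * A + ku * B) A g" and bAB: "b A B \<noteq> 0" and bgd: "b g d \<noteq> 0"
    and Psup: "\<And>n. sup_ok kv ku (Pc n) (kv * e ^ n) (e ^ n) (e ^ n) \<and> Pc n (e ^ n) 0 \<noteq> 0"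
    and Q1: "Q (Suc 0) = b" and Qs: "\<And>m. Q (Suc (Suc m)) = scomp b (Pc (Suc m)) (Q (Suc m))"
    and c2: "ku * e = kv * A + ku * B"
  shows "sup_ok kv ku (Q (Suc m)) (ku * e ^ Suc m) (A * Sf e B m) (Gf g e d m)
    \<and> Q (Suc m) (A * Sf e B m) (B ^ Suc m) \<noteq> 0 \<and> Q (Suc m) (Gf g e d m) (d ^ Suc m) \<noteq> 0
    \<and> kv * (A * Sf e B m) + ku * B ^ Suc m = ku * e ^ Suc m
    \<and> kv * Gf g e d m + ku * d ^ Suc m = ku * e ^ Suc m"
proof (induction m)
  case 0
  have KK: "kv * g + ku * d = kv * A + ku * B" unfolding g Bd by (simp add: algebra_simps)
  show ?case using bsup bAB bgd c2 KK Q1 by simp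
next
  case (Suc m)
  define G where "G = Gf g e d m"
  define a where "a = A * Sf e B m"
  define D where "D = e ^ Suc m"
  have Dpos: "D > 0" using e1 unfolding D_def by simp
  have Bpos: "B > 0" using Bd kv by simp
  have RS: "sup_ok kv ku (Q (Suc m)) (ku * D) a G" and Rlo: "Q (Suc m) a (B ^ Suc m) \<noteq> 0"
    and Rhi: "Q (Suc m) G (d ^ Suc m) \<noteq> 0" and linA: "kv * a + ku * B ^ Suc m = ku * D"
    and linG: "kv * G + ku * d ^ Suc m = ku * D"
    using Suc unfolding G_def a_def D_def by auto
  have PS: "sup_ok kv ku (Pc (Suc m)) (kv * D) D D" and Pnz: "Pc (Suc m) D 0 \<noteq> 0"
    using Psup[of "Suc m"] unfolding D_def by auto
  have KK: "kv * g + ku * d = kv * A + ku * B" unfolding g Bd by (simp add: algebra_simps)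
  have Gs: "Gf g e d (Suc m) = g * D + d * G" unfolding G_def D_def by simp
  have Ss: "A * Sf e B (Suc m) = A * D + B * a" unfolding a_def D_def by (simp add: algebra_simps)
  have M: "ku * e ^ Suc (Suc m) = A * (kv * D) + B * (ku * D)"
  proof -
    have "ku * e ^ Suc (Suc m) = (ku * e) * D" unfolding D_def by simp
    also have "\<dots> = A * (kv * D) + B * (ku * D)" unfolding c2 by (simp add: algebra_simps)
    finally show ?thesis .
  qed
  have M2: "A * (kv * D) + B * (ku * D) = g * (kv * D) + d * (ku * D)"
    using KK by (metis add_mult_distrib mult.assoc mult.commute)
  have levge: "A * (kv * D) + B * (ku * D) \<le> i * (kv * D) + j * (ku * D)" and
       levon: "i * (kv * D) + j * (ku * D) = A * (kv * D) + B * (ku * D) \<Longrightarrow> kv * i + ku * j = kv * A + ku * B"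
    if bij: "b i j \<noteq> 0" for i j
  proof -
    have h: "kv * A + ku * B \<le> kv * i + ku * j" using bsup bij unfolding sup_ok_def by auto
    have e: "i * (kv * D) + j * (ku * D) = (kv * i + ku * j) * D" "A * (kv * D) + B * (ku * D) = (kv * A + ku * B) * D"
      by (simp_all add: algebra_simps)
    show "A * (kv * D) + B * (ku * D) \<le> i * (kv * D) + j * (ku * D)" unfolding e using h by simp
    show "kv * i + ku * j = kv * A + ku * B" if "i * (kv * D) + j * (ku * D) = A * (kv * D) + B * (ku * D)"
      using that Dpos unfolding e by simp
  qed
  have online: "A \<le> i \<and> i \<le> g" if "b i j \<noteq> 0" "kv * i + ku * j = kv * A + ku * B" for i j
    using bsup that unfolding sup_ok_def by auto
  have lofacts: "A * D + B * a \<le> i * D + j * a \<and> ((i,j) \<noteq> (A,B) \<longrightarrow> A * D + B * a < i * D + j * a)"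
    if bij: "b i j \<noteq> 0" and on: "kv * i + ku * j = kv * A + ku * B" for i j
  proof -
    have Ai: "A \<le> i" using online[OF bij on] by simp
    have id: "ku * (i * D + j * a) = ku * (A * D + B * a) + (i - A) * (ku * B ^ Suc m)"
      by (rule arith_line_lo[OF on linA Ai])
    have le: "A * D + B * a \<le> i * D + j * a"
    proof -
      have "ku * (A * D + B * a) \<le> ku * (i * D + j * a)" using id by linarith
      then show ?thesis using ku by simp
    qed
    have lt: "A * D + B * a < i * D + j * a" if ne: "(i,j) \<noteq> (A,B)"
    proof -
      have "i \<noteq> A"
      proof
        assume iA: "i = A"
        then have "ku * j = ku * B" using on by simp
        then have "j = B" using ku by simp
        then show False using ne iA by simp
      qed
      then have "0 < (i - A) * (ku * B ^ Suc m)" using Ai ku Bpos by simp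
      then have "ku * (A * D + B * a) < ku * (i * D + j * a)" using id by linarith
      then show ?thesis using ku by simp
    qed
    show ?thesis using le lt by blast
  qed
  have hifacts: "i * D + j * G \<le> g * D + d * G \<and> ((i,j) \<noteq> (g,d) \<longrightarrow> i * D + j * G < g * D + d * G)"
    if bij: "b i j \<noteq> 0" and on: "kv * i + ku * j = kv * A + ku * B" for i j
  proof -
    have ig: "i \<le> g" using online[OF bij on] by simp
    have on': "kv * i + ku * j = kv * g + ku * d" using on KK by simp
    have id: "ku * (i * D + j * G) + (g - i) * (ku * d ^ Suc m) = ku * (g * D + d * G)"
      by (rule arith_line_hi[OF on' linG ig])
    have le: "i * D + j * G \<le> g * D + d * G"
    proof -
      have "ku * (i * D + j * G) \<le> ku * (g * D + d * G)" using id by linarith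
      then show ?thesis using ku by simp
    qed
    have lt: "i * D + j * G < g * D + d * G" if ne: "(i,j) \<noteq> (g,d)"
    proof -
      have "i \<noteq> g"
      proof
        assume ig2: "i = g"
        then have "ku * j = ku * d" using on' by simp
        then have "j = d" using ku by simp
        then show False using ne ig2 by simp
      qed
      then have "0 < (g - i) * (ku * d ^ Suc m)" using ig ku dpos by simp
      then have "ku * (i * D + j * G) < ku * (g * D + d * G)" using id by linarith
      then show ?thesis using ku by simp
    qed
    show ?thesis using le lt by blast
  qed
  have cond: "A * (kv * D) + B * (ku * D) \<le> i * (kv * D) + j * (ku * D) \<and>
      (i * (kv * D) + j * (ku * D) = A * (kv * D) + B * (ku * D) \<longrightarrow> A * D + B * a \<le> i * D + j * a \<and> i * D + j * G \<le> g * D + d * G)"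
    if "b i j \<noteq> 0" for i j using levge[OF that] levon[OF that] lofacts[OF that] hifacts[OF that] by blast
  have sup: "sup_ok kv ku (scomp b (Pc (Suc m)) (Q (Suc m))) (A * (kv * D) + B * (ku * D)) (A * D + B * a) (g * D + d * G)"
    by (rule sup_comp[OF PS RS]) (rule cond)
  have lo: "scomp b (Pc (Suc m)) (Q (Suc m)) (A * D + B * a) (A * 0 + B * B ^ Suc m) = b A B * Pc (Suc m) D 0 ^ A * Q (Suc m) a (B ^ Suc m) ^ B"
  proof (rule comp_end[OF PS RS ku])
    show "kv * D + ku * 0 = kv * D" by simp
    show "kv * a + ku * B ^ Suc m = ku * D" by (rule linA)
    show "D = D \<and> a = a \<and> (\<forall>i j. b i j \<noteq> 0 \<longrightarrow> i * (kv * D) + j * (ku * D) = A * (kv * D) + B * (ku * D) \<longrightarrow> (i, j) \<noteq> (A, B) \<longrightarrow> A * D + B * a < i * D + j * a)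
      \<or> D = D \<and> a = G \<and> (\<forall>i j. b i j \<noteq> 0 \<longrightarrow> i * (kv * D) + j * (ku * D) = A * (kv * D) + B * (ku * D) \<longrightarrow> (i, j) \<noteq> (A, B) \<longrightarrow> i * D + j * G < A * D + B * G)"
      using levon lofacts by blast
    show "\<And>i j. b i j \<noteq> 0 \<Longrightarrow> A * (kv * D) + B * (ku * D) \<le> i * (kv * D) + j * (ku * D)" using levge by blast
  qed simp
  have hi: "scomp b (Pc (Suc m)) (Q (Suc m)) (g * D + d * G) (g * 0 + d * d ^ Suc m) = b g d * Pc (Suc m) D 0 ^ g * Q (Suc m) G (d ^ Suc m) ^ d"
  proof (rule comp_end[OF PS RS ku])
    show "kv * D + ku * 0 = kv * D" by simp
    show "kv * G + ku * d ^ Suc m = ku * D" by (rule linG)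
    show "D = D \<and> G = a \<and> (\<forall>i j. b i j \<noteq> 0 \<longrightarrow> i * (kv * D) + j * (ku * D) = A * (kv * D) + B * (ku * D) \<longrightarrow> (i, j) \<noteq> (g, d) \<longrightarrow> g * D + d * a < i * D + j * a)
      \<or> D = D \<and> G = G \<and> (\<forall>i j. b i j \<noteq> 0 \<longrightarrow> i * (kv * D) + j * (ku * D) = A * (kv * D) + B * (ku * D) \<longrightarrow> (i, j) \<noteq> (g, d) \<longrightarrow> i * D + j * G < g * D + d * G)"
      using levon hifacts by blast
    show "\<And>i j. b i j \<noteq> 0 \<Longrightarrow> A * (kv * D) + B * (ku * D) \<le> i * (kv * D) + j * (ku * D)" using levge by blast
    show "g * (kv * D) + d * (ku * D) = A * (kv * D) + B * (ku * D)" using M2 by simp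
  qed
  have QS: "Q (Suc (Suc m)) = scomp b (Pc (Suc m)) (Q (Suc m))" by (rule Qs)
  have nz1: "Q (Suc (Suc m)) (A * Sf e B (Suc m)) (B ^ Suc (Suc m)) \<noteq> 0"
    using lo Pnz Rlo bAB unfolding QS Ss by simp
  have nz2: "Q (Suc (Suc m)) (Gf g e d (Suc m)) (d ^ Suc (Suc m)) \<noteq> 0"
    using hi Pnz Rhi bgd unfolding QS Gs by simp
  have lin1: "kv * (A * Sf e B (Suc m)) + ku * B ^ Suc (Suc m) = ku * e ^ Suc (Suc m)"
  proof -
    have "kv * (A * Sf e B (Suc m)) + ku * B ^ Suc (Suc m) = kv * A * D + B * (kv * a + ku * B ^ Suc m)"
      unfolding Ss by (simp add: algebra_simps)
    also have "\<dots> = A * (kv * D) + B * (ku * D)" unfolding linA by (simp add: algebra_simps)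
    finally show ?thesis using M by simp
  qed
  have lin2: "kv * Gf g e d (Suc m) + ku * d ^ Suc (Suc m) = ku * e ^ Suc (Suc m)"
  proof -
    have "kv * Gf g e d (Suc m) + ku * d ^ Suc (Suc m) = kv * g * D + d * (kv * G + ku * d ^ Suc m)"
      unfolding Gs by (simp add: algebra_simps)
    also have "\<dots> = g * (kv * D) + d * (ku * D)" unfolding linG by (simp add: algebra_simps)
    finally show ?thesis using M M2 by simp
  qed
  show ?case using sup nz1 nz2 lin1 lin2 unfolding QS M[symmetric] Gs[symmetric] Ss[symmetric] by simp
qed


lemma line_facts:
  fixes x1 y1 x2 y2 u v L :: real
  assumes u: "u > 0" and x: "x1 < x2" and l1: "v * x1 + u * y1 = L" and l2: "v * x2 + u * y2 = L"
  shows "slope (x1,y1) (x2,y2) = - v / u" "y_intercept (x1,y1) (x2,y2) = L / u"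
proof -
  have e: "u * (y2 - y1) = - v * (x2 - x1)" using l1 l2 by (simp add: algebra_simps)
  have s: "(y2 - y1) / (x2 - x1) = - v / u" using e u x by (simp add: field_simps)
  show "slope (x1,y1) (x2,y2) = - v / u" unfolding slope_def using s by simp
  have "y_intercept (x1,y1) (x2,y2) = y1 + v / u * x1" unfolding y_intercept_def using s by simp
  also have "\<dots> = (v * x1 + u * y1) / u" using u by (simp add: field_simps)
  finally show "y_intercept (x1,y1) (x2,y2) = L / u" using l1 by simp
qed

lemma G_sum: "real (Gf g e d m) = real g * (\<Sum>k<Suc m. real e ^ (m - k) * real d ^ k)"
proof (induction m)
  case 0 then show ?case by simp
next
  case (Suc m)
  have "(\<Sum>k<Suc (Suc m). real e ^ (Suc m - k) * real d ^ k) = real e ^ Suc m + (\<Sum>k<Suc m. real e ^ (Suc m - Suc k) * real d ^ Suc k)"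
    by (subst sum.lessThan_Suc_shift) simp
  also have "(\<Sum>k<Suc m. real e ^ (Suc m - Suc k) * real d ^ Suc k) = real d * (\<Sum>k<Suc m. real e ^ (m - k) * real d ^ k)"
    by (simp add: sum_distrib_left algebra_simps)
  finally show ?case using Suc by (simp add: algebra_simps)
qed

lemma S_sum: "real (Sf e B m) = (\<Sum>k<Suc m. real e ^ (m - k) * real B ^ k)"
proof (induction m)
  case 0 then show ?case by simp
next
  case (Suc m)
  have "(\<Sum>k<Suc (Suc m). real e ^ (Suc m - k) * real B ^ k) = real e ^ Suc m + (\<Sum>k<Suc m. real e ^ (Suc m - Suc k) * real B ^ Suc k)"
    by (subst sum.lessThan_Suc_shift) simp
  also have "(\<Sum>k<Suc m. real e ^ (Suc m - Suc k) * real B ^ Suc k) = real B * (\<Sum>k<Suc m. real e ^ (m - k) * real B ^ k)"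
    by (simp add: sum_distrib_left algebra_simps)
  finally show ?case using Suc by (simp add: algebra_simps)
qed

theorem proposition3:
  fixes p :: "complex \<Rightarrow> complex" and q :: "complex \<Rightarrow> complex \<Rightarrow> complex"
    and a :: "nat \<Rightarrow> complex" and b :: "nat \<Rightarrow> nat \<Rightarrow> complex"
    and \<delta> A B \<gamma> d :: nat
  assumes p_exp: "has_expansion1 a p"
    and q_exp: "has_expansion2 b q"
    and delta_pos: "\<delta> \<ge> 1"
    and a_delta: "a \<delta> \<noteq> 0" and a_low: "\<forall>k<\<delta>. a k = 0"
    and b00: "b 0 0 = 0"
    and q_nonzero: "\<exists>i j. b i j \<noteq> 0"
    and last_vertex: "(real \<gamma>, real d) \<in> np_vertices b"
    and last_max: "\<forall>X \<in> np_vertices b. fst X \<le> real \<gamma>"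
    and prev_vertex: "preceding_vertex b (real A, real B) (real \<gamma>, real d)"
    and case2: "real \<delta> \<le> y_intercept (real A, real B) (real \<gamma>, real d)"
    and d_pos: "d > 0"
  shows
   "(real \<delta> < y_intercept (real A, real B) (real \<gamma>, real d) \<longrightarrow>
      (\<forall>n\<ge>1.
        let \<gamma>n = real \<gamma> * (\<Sum>k<n. real \<delta> ^ (n - 1 - k) * real d ^ k);
            Vn = (\<gamma>n, real d ^ n);
            Pn = (\<gamma>n - (real \<gamma> - real A) * real d ^ (n - 1), real B * real d ^ (n - 1));
            cn = germ_coeffs (skewQ p q n)
        in preceding_vertex cn Pn Vn
           \<and> slope Pn Vn = - 1 / ((real \<gamma> - real A) / (real B - real d))
           \<and> real \<delta> ^ n < y_intercept Pn Vn))
  \<and> (real \<delta> = y_intercept (real A, real B) (real \<gamma>, real d) \<longrightarrow>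
      (\<forall>n\<ge>1.
        let \<gamma>n = real \<gamma> * (\<Sum>k<n. real \<delta> ^ (n - 1 - k) * real d ^ k);
            Vn = (\<gamma>n, real d ^ n);
            Pn = ((\<Sum>k<n. real \<delta> ^ (n - 1 - k) * real B ^ k) * real A, real B ^ n);
            cn = germ_coeffs (skewQ p q n)
        in preceding_vertex cn Pn Vn
           \<and> slope Pn Vn = - 1 / ((real \<gamma> - real A) / (real B - real d))
           \<and> real \<delta> ^ n = y_intercept Pn Vn))"
proof -
  have bf: "A < \<gamma> \<and> d < B \<and> b A B \<noteq> 0 \<and> b \<gamma> d \<noteq> 0
     \<and> (\<forall>k l. b k l \<noteq> 0 \<longrightarrow> (B - d) * A + (\<gamma> - A) * B \<le> (B - d) * k + (\<gamma> - A) * l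
          \<and> ((B - d) * k + (\<gamma> - A) * l = (B - d) * A + (\<gamma> - A) * B \<longrightarrow> A \<le> k \<and> k \<le> \<gamma>))
     \<and> (\<forall>k l. b k l \<noteq> 0 \<longrightarrow> d \<le> l)"
    by (rule base_facts[OF last_vertex last_max prev_vertex])
  define ku where "ku = \<gamma> - A"
  define kv where "kv = B - d"
  have Ag: "A < \<gamma>" and dB: "d < B" and bAB: "b A B \<noteq> 0" and bgd: "b \<gamma> d \<noteq> 0"
    and ylow: "\<And>k l. b k l \<noteq> 0 \<Longrightarrow> d \<le> l" using bf by auto
  have ku: "ku > 0" and kv: "kv > 0" using Ag dB unfolding ku_def kv_def by auto
  have g: "\<gamma> = A + ku" and Bd: "B = d + kv" using Ag dB unfolding ku_def kv_def by auto
  have bsup: "sup_ok kv ku b (kv * A + ku * B) A \<gamma>"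
    using bf unfolding sup_ok_def ku_def kv_def by blast
  have a0: "a 0 = 0" using a_low delta_pos by auto
  have Psup: "\<And>n. sup_ok kv ku (pcs a n) (kv * \<delta> ^ n) (\<delta> ^ n) (\<delta> ^ n) \<and> pcs a n (\<delta> ^ n) 0 \<noteq> 0"
    by (rule pcs_sup[OF delta_pos a_delta a_low kv ku])
  have Qg: "\<And>n. good (qcs a b n) (skewQ p q n)" using qcs_good[OF p_exp a0 q_exp b00] by blast
  have germ: "\<And>n. germ_coeffs (skewQ p q n) = qcs a b n"
    by (rule germ_coeffs_eq[OF good_exp[OF Qg]])
  have Q1: "qcs a b (Suc 0) = b"
  proof -
    have "skewQ p q (Suc 0) = q" by (auto simp: fun_eq_iff)
    then have "has_expansion2 (qcs a b (Suc 0)) q" using good_exp[OF Qg[of "Suc 0"]] by simp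
    then show ?thesis using exp_unique q_exp by blast
  qed
  have Qs: "\<And>m. qcs a b (Suc (Suc m)) = scomp b (pcs a (Suc m)) (qcs a b (Suc m))" by simp
  define L0 where "L0 = kv * A + ku * B"
  have L0g: "kv * \<gamma> + ku * d = L0" unfolding L0_def g Bd by (simp add: algebra_simps)
  have r1: "real kv * real A + real ku * real B = real L0" unfolding L0_def by simp
  have r2: "real kv * real \<gamma> + real ku * real d = real L0" unfolding L0g[symmetric] by simp
  have lf0: "slope (real A, real B) (real \<gamma>, real d) = - real kv / real ku"
     "y_intercept (real A, real B) (real \<gamma>, real d) = real L0 / real ku"
    using line_facts[OF _ _ r1 r2] ku Ag by auto
  have slope_target: "- 1 / ((real \<gamma> - real A) / (real B - real d)) = - real kv / real ku"
  proof -
    have "real \<gamma> - real A = real ku" "real B - real d = real kv" using Ag dB unfolding ku_def kv_def by auto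
    then show ?thesis using ku kv by simp
  qed
  show ?thesis
  proof (intro conjI impI allI)
    fix n :: nat
    assume lt: "real \<delta> < y_intercept (real A, real B) (real \<gamma>, real d)" and n1: "n \<ge> 1"
    then have "real \<delta> * real ku < real L0" using lf0 ku by (simp add: field_simps)
    then have c1: "ku * \<delta> < kv * A + ku * B" unfolding L0_def by (metis of_nat_less_iff of_nat_mult mult.commute)
    obtain m where n: "n = Suc m" using n1 by (cases n) auto
    have IH: "sup_ok kv ku (qcs a b (Suc m)) (kv * Gf \<gamma> \<delta> d m + ku * d ^ Suc m) (Af A \<gamma> \<delta> d m) (Gf \<gamma> \<delta> d m)
      \<and> qcs a b (Suc m) (Af A \<gamma> \<delta> d m) (B * d ^ m) \<noteq> 0 \<and> qcs a b (Suc m) (Gf \<gamma> \<delta> d m) (d ^ Suc m) \<noteq> 0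
      \<and> ku * \<delta> ^ Suc m < kv * Gf \<gamma> \<delta> d m + ku * d ^ Suc m
      \<and> Gf \<gamma> \<delta> d m = Af A \<gamma> \<delta> d m + ku * d ^ m
      \<and> kv * Af A \<gamma> \<delta> d m + ku * (B * d ^ m) = kv * Gf \<gamma> \<delta> d m + ku * d ^ Suc m"
      by (rule case1_induct[OF ku kv g Bd d_pos delta_pos bsup bAB bgd ylow Psup Q1 Qs c1])
    define G where "G = Gf \<gamma> \<delta> d m"
    define Al where "Al = Af A \<gamma> \<delta> d m"
    define Kn where "Kn = kv * G + ku * d ^ Suc m"
    have S: "sup_ok kv ku (qcs a b (Suc m)) Kn Al G" and nz1: "qcs a b (Suc m) Al (B * d ^ m) \<noteq> 0"
      and nz2: "qcs a b (Suc m) G (d ^ Suc m) \<noteq> 0" and KnD: "ku * \<delta> ^ Suc m < Kn"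
      and GA: "G = Al + ku * d ^ m" and lin1: "kv * Al + ku * (B * d ^ m) = Kn"
      using IH unfolding G_def Al_def Kn_def by auto
    have x12: "Al < G" using GA ku d_pos by simp
    have pv: "preceding_vertex (qcs a b (Suc m)) (real Al, real (B * d ^ m)) (real G, real (d ^ Suc m))"
      by (rule np_conclusion[OF ku kv x12 lin1 Kn_def[symmetric] nz1 nz2]) (use S in \<open>auto simp: sup_ok_def\<close>)
    have lr1: "real kv * real Al + real ku * real (B * d ^ m) = real Kn" using lin1 by (simp flip: lin1)
    have lr2: "real kv * real G + real ku * real (d ^ Suc m) = real Kn" unfolding Kn_def by simp
    have lf: "slope (real Al, real (B * d ^ m)) (real G, real (d ^ Suc m)) = - real kv / real ku"
      "y_intercept (real Al, real (B * d ^ m)) (real G, real (d ^ Suc m)) = real Kn / real ku"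
      using line_facts[OF _ _ lr1 lr2] ku x12 by auto
    have gn: "real \<gamma> * (\<Sum>k<n. real \<delta> ^ (n - 1 - k) * real d ^ k) = real G"
      unfolding G_def G_sum n by simp
    have Pn: "(real \<gamma> * (\<Sum>k<n. real \<delta> ^ (n - 1 - k) * real d ^ k) - (real \<gamma> - real A) * real d ^ (n - 1), real B * real d ^ (n - 1))
        = (real Al, real (B * d ^ m))"
    proof -
      have "real \<gamma> - real A = real ku" using Ag unfolding ku_def by simp
      moreover have "real G = real Al + real ku * real d ^ m" using GA by simp
      ultimately show ?thesis using gn n by simp
    qed
    have Vn: "(real \<gamma> * (\<Sum>k<n. real \<delta> ^ (n - 1 - k) * real d ^ k), real d ^ n) = (real G, real (d ^ Suc m))"
      using gn n by simp
    have ineq: "real \<delta> ^ n < real Kn / real ku"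
    proof -
      have "real ku * real \<delta> ^ Suc m < real Kn" using KnD by (metis of_nat_less_iff of_nat_mult of_nat_power)
      then show ?thesis using ku n by (simp add: field_simps)
    qed
    show "let \<gamma>n = real \<gamma> * (\<Sum>k<n. real \<delta> ^ (n - 1 - k) * real d ^ k);
            Vn = (\<gamma>n, real d ^ n);
            Pn = (\<gamma>n - (real \<gamma> - real A) * real d ^ (n - 1), real B * real d ^ (n - 1));
            cn = germ_coeffs (skewQ p q n)
        in preceding_vertex cn Pn Vn
           \<and> slope Pn Vn = - 1 / ((real \<gamma> - real A) / (real B - real d))
           \<and> real \<delta> ^ n < y_intercept Pn Vn"
      unfolding Let_def Pn Vn germ slope_target using pv lf ineq n by simp
  next
    fix n :: nat
    assume eqi: "real \<delta> = y_intercept (real A, real B) (real \<gamma>, real d)" and n1: "n \<ge> 1"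
    then have "real \<delta> * real ku = real L0" using lf0 ku by (simp add: field_simps)
    then have c2: "ku * \<delta> = kv * A + ku * B" unfolding L0_def by (metis of_nat_eq_iff of_nat_mult mult.commute)
    obtain m where n: "n = Suc m" using n1 by (cases n) auto
    have IH: "sup_ok kv ku (qcs a b (Suc m)) (ku * \<delta> ^ Suc m) (A * Sf \<delta> B m) (Gf \<gamma> \<delta> d m)
      \<and> qcs a b (Suc m) (A * Sf \<delta> B m) (B ^ Suc m) \<noteq> 0 \<and> qcs a b (Suc m) (Gf \<gamma> \<delta> d m) (d ^ Suc m) \<noteq> 0
      \<and> kv * (A * Sf \<delta> B m) + ku * B ^ Suc m = ku * \<delta> ^ Suc m
      \<and> kv * Gf \<gamma> \<delta> d m + ku * d ^ Suc m = ku * \<delta> ^ Suc m"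
      by (rule case2_induct[OF ku kv g Bd d_pos delta_pos bsup bAB bgd Psup Q1 Qs c2])
    define G where "G = Gf \<gamma> \<delta> d m"
    define Al where "Al = A * Sf \<delta> B m"
    define Kn where "Kn = ku * \<delta> ^ Suc m"
    have S: "sup_ok kv ku (qcs a b (Suc m)) Kn Al G" and nz1: "qcs a b (Suc m) Al (B ^ Suc m) \<noteq> 0"
      and nz2: "qcs a b (Suc m) G (d ^ Suc m) \<noteq> 0"
      and lin1: "kv * Al + ku * B ^ Suc m = Kn" and lin2: "kv * G + ku * d ^ Suc m = Kn"
      using IH unfolding G_def Al_def Kn_def by auto
    have x12: "Al < G"
    proof -
      have "d ^ Suc m < B ^ Suc m" using dB by (rule power_strict_mono) auto
      then have "ku * d ^ Suc m < ku * B ^ Suc m" using ku by simp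
      then have "kv * Al < kv * G" using lin1 lin2 by linarith
      then show ?thesis using kv by simp
    qed
    have pv: "preceding_vertex (qcs a b (Suc m)) (real Al, real (B ^ Suc m)) (real G, real (d ^ Suc m))"
      by (rule np_conclusion[OF ku kv x12 lin1 lin2 nz1 nz2]) (use S in \<open>auto simp: sup_ok_def\<close>)
    have lr1: "real kv * real Al + real ku * real (B ^ Suc m) = real Kn" by (simp flip: lin1)
    have lr2: "real kv * real G + real ku * real (d ^ Suc m) = real Kn" by (simp flip: lin2)
    have lf: "slope (real Al, real (B ^ Suc m)) (real G, real (d ^ Suc m)) = - real kv / real ku"
      "y_intercept (real Al, real (B ^ Suc m)) (real G, real (d ^ Suc m)) = real Kn / real ku"
      using line_facts[OF _ _ lr1 lr2] ku x12 by auto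
    have gn: "real \<gamma> * (\<Sum>k<n. real \<delta> ^ (n - 1 - k) * real d ^ k) = real G"
      unfolding G_def G_sum n by simp
    have Pn: "((\<Sum>k<n. real \<delta> ^ (n - 1 - k) * real B ^ k) * real A, real B ^ n) = (real Al, real (B ^ Suc m))"
      unfolding Al_def n using S_sum[of \<delta> B m] by (simp add: mult.commute)
    have Vn: "(real \<gamma> * (\<Sum>k<n. real \<delta> ^ (n - 1 - k) * real d ^ k), real d ^ n) = (real G, real (d ^ Suc m))"
      using gn n by simp
    have eqn: "real \<delta> ^ n = real Kn / real ku"
      unfolding Kn_def n using ku by simp
    show "let \<gamma>n = real \<gamma> * (\<Sum>k<n. real \<delta> ^ (n - 1 - k) * real d ^ k);
            Vn = (\<gamma>n, real d ^ n);
            Pn = ((\<Sum>k<n. real \<delta> ^ (n - 1 - k) * real B ^ k) * real A, real B ^ n);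
            cn = germ_coeffs (skewQ p q n)
        in preceding_vertex cn Pn Vn
           \<and> slope Pn Vn = - 1 / ((real \<gamma> - real A) / (real B - real d))
           \<and> real \<delta> ^ n = y_intercept Pn Vn"
      unfolding Let_def Pn Vn germ slope_target using pv lf eqn n by simp
  qed
qed


end
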